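(* Let $\mathfrak m$ be a smooth function on $\mathbb R^n\setminus\{0\}$ such that for every multi-index $\alpha$ there exist $L_1^\alpha,L_2^\alpha\ge0$ and $C_\alpha$ with $|\partial^\alpha\mathfrak m(\xi)|\le C_\alpha\max\{|\xi|^{-L_1^\alpha},|\xi|^{L_2^\alpha}\}$ for all $\xi\ne0$. Then: (i) for every $g\in\mathcal S_{00}(\mathbb R^n)$, the function $\mathfrak m g$ (defined to be $0$ at $\xi=0$) belongs to $\mathcal S_{00}(\mathbb R^n)$; (ii) for every tempered distribution $f\in\mathcal S'(\mathbb R^n)$, the linear functional $g\mapsto\langle f,\mathfrak m g\rangle$ on $\mathcal S_{00}(\mathbb R^n)$ is bounded in the topology of $\mathcal S(\mathbb R^n)$, i.e. $|\langle f,\mathfrak mg\rangle|$ is bounded by a constant times a finite sum of Schwartz seminorms of $g$; consequently it extends to a tempered distribution on $\mathcal S(\mathbb R^n)$.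
   Context: $\mathcal S_{00}(\mathbb R^n)=\{g\in\mathcal S(\mathbb R^n):\partial^\gamma g(0)=0\text{ for all multi-indices }\gamma\}$, with the topology inherited from $\mathcal S(\mathbb R^n)$. *)

theory Defs
  imports "HOL-Analysis.Analysis"
begin

text \<open>Functions on R^n are modelled as functions on the Euclidean space real^'n
  (with 'n an arbitrary finite index type, n = CARD('n)), with complex values.
  A multi-index is encoded as a finite list of coordinate directions; the
  derivative along the list applies the partial derivatives one after another.\<close>

definition partial_dir :: "'n::finite \<Rightarrow> (real^'n \<Rightarrow> complex) \<Rightarrow> real^'n \<Rightarrow> complex" where
  "partial_dir i f x = vector_derivative (\<lambda>t. f (x + t *\<^sub>R axis i 1)) (at 0)"

fun dpart :: "'n::finite list \<Rightarrow> (real^'n \<Rightarrow> complex) \<Rightarrow> real^'n \<Rightarrow> complex" where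
  "dpart [] f = f"
| "dpart (i # ds) f = partial_dir i (dpart ds f)"

definition smooth_fun_on :: "(real^'n::finite) set \<Rightarrow> (real^'n \<Rightarrow> complex) \<Rightarrow> bool" where
  "smooth_fun_on U f \<longleftrightarrow>
     (\<forall>ds. continuous_on U (dpart ds f) \<and>
       (\<forall>i. \<forall>x\<in>U. (\<lambda>t. dpart ds f (x + t *\<^sub>R axis i 1)) differentiable (at 0)))"

definition schwartz :: "(real^'n::finite \<Rightarrow> complex) set" where
  "schwartz = {g. smooth_fun_on UNIV g \<and>
     (\<forall>ds k. bounded (range (\<lambda>x. (1 + norm x) ^ k * norm (dpart ds g x))))}"

definition schwartz00 :: "(real^'n::finite \<Rightarrow> complex) set" where
  "schwartz00 = {g \<in> schwartz. \<forall>ds. dpart ds g 0 = 0}"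

definition schwartz_seminorm :: "nat \<Rightarrow> 'n::finite list \<Rightarrow> (real^'n \<Rightarrow> complex) \<Rightarrow> real" where
  "schwartz_seminorm k ds g = (SUP x. (1 + norm x) ^ k * norm (dpart ds g x))"

definition schwartz_seminorm_sum :: "nat \<Rightarrow> (real^'n::finite \<Rightarrow> complex) \<Rightarrow> real" where
  "schwartz_seminorm_sum N g =
     (\<Sum>k\<le>N. \<Sum>ds\<in>{ds :: 'n list. length ds \<le> N}. schwartz_seminorm k ds g)"

definition tempered_distribution :: "((real^'n::finite \<Rightarrow> complex) \<Rightarrow> complex) \<Rightarrow> bool" where
  "tempered_distribution T \<longleftrightarrow>
     (\<forall>f\<in>schwartz. \<forall>g\<in>schwartz. T (\<lambda>x. f x + g x) = T f + T g) \<and>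
     (\<forall>c. \<forall>f\<in>schwartz. T (\<lambda>x. c * f x) = c * T f) \<and>
     (\<exists>C N. \<forall>g\<in>schwartz. norm (T g) \<le> C * schwartz_seminorm_sum N g)"

end

theory Submission
  imports Defs "HOL-Library.Function_Algebras"
begin


abbreviation ax :: "'n::finite \<Rightarrow> real^'n" where "ax i \<equiv> axis i 1"

lemma vd_local:
  assumes "open S" "0 \<in> S" "\<And>t. t \<in> S \<Longrightarrow> F t = G t"
  shows "vector_derivative F (at (0::real)) = vector_derivative G (at 0)"
proof -
  have "\<And>D. (F has_vector_derivative D) (at 0) \<longleftrightarrow> (G has_vector_derivative D) (at 0)"
    using assms has_vector_derivative_transform_within_open by metis
  then show ?thesis unfolding vector_derivative_def by simp
qed

lemma open_line_pre: fixes x e :: "'a::real_normed_vector" shows "open U \<Longrightarrow> open {t::real. x + t *\<^sub>R e \<in> U}"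
proof -
  assume "open U"
  have "open ((\<lambda>t::real. x + t *\<^sub>R e) -` U)"
    by (rule open_vimage[OF \<open>open U\<close>]) (intro continuous_on_add continuous_on_const continuous_on_scaleR continuous_on_id)
  then show ?thesis by (simp add: vimage_def)
qed

lemma partial_dir_local:
  assumes "open U" "x \<in> U" "\<And>y. y \<in> U \<Longrightarrow> F y = G y"
  shows "partial_dir i F x = partial_dir i G x"
  unfolding partial_dir_def
  by (rule vd_local[OF open_line_pre[OF assms(1)]]) (use assms in auto)

lemma dpart_local:
  assumes "open U" "\<And>y. y \<in> U \<Longrightarrow> F y = G y"
  shows "x \<in> U \<Longrightarrow> dpart ds F x = dpart ds G x"
proof (induction ds arbitrary: x)
  case Nil then show ?case using assms by simp
next
  case (Cons i ds)
  then show ?case using partial_dir_local[OF assms(1) Cons.prems, of "dpart ds F" "dpart ds G"] by simp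
qed

lemma line_hvd:
  assumes "(\<lambda>t. F (x + t *\<^sub>R ax i)) differentiable (at 0)"
  shows "((\<lambda>t. F (x + t *\<^sub>R ax i)) has_vector_derivative partial_dir i F x) (at 0)"
  using assms unfolding partial_dir_def by (simp add: vector_derivative_works)

lemma line_hvd_at:
  assumes "(\<lambda>t. F ((x + t0 *\<^sub>R ax i) + t *\<^sub>R ax i)) differentiable (at 0)"
  shows "((\<lambda>t. F (x + t *\<^sub>R ax i)) has_vector_derivative partial_dir i F (x + t0 *\<^sub>R ax i)) (at t0)"
proof -
  have h: "((\<lambda>t. F ((x + t0 *\<^sub>R ax i) + t *\<^sub>R ax i)) has_vector_derivative partial_dir i F (x + t0 *\<^sub>R ax i)) (at ((\<lambda>t. t - t0) t0))"
    using line_hvd[OF assms] by simp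
  have d: "((\<lambda>t. t - t0) has_vector_derivative 1) (at t0)"
    by (auto intro!: derivative_eq_intros)
  have "((\<lambda>t. F ((x + t0 *\<^sub>R ax i) + t *\<^sub>R ax i)) \<circ> (\<lambda>t. t - t0)) = (\<lambda>t. F (x + t *\<^sub>R ax i))"
    by (auto simp: o_def algebra_simps)
  then show ?thesis using vector_diff_chain_at[OF d h] by simp
qed

lemma smoothD:
  assumes "smooth_fun_on U f" "x \<in> U"
  shows "((\<lambda>t. dpart ds f (x + t *\<^sub>R ax i)) has_vector_derivative dpart (i # ds) f x) (at 0)"
  using assms line_hvd[of "dpart ds f" x i] unfolding smooth_fun_on_def by auto

lemma smoothC:
  assumes "smooth_fun_on U f" 
  shows "continuous_on U (dpart ds f)"
  using assms unfolding smooth_fun_on_def by auto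

lemma smoothI:
  assumes "\<And>ds. continuous_on U (dpart ds f)"
    and "\<And>ds i x. x \<in> U \<Longrightarrow> \<exists>D. ((\<lambda>t. dpart ds f (x + t *\<^sub>R ax i)) has_vector_derivative D) (at 0)"
  shows "smooth_fun_on U f"
  using assms differentiableI_vector unfolding smooth_fun_on_def by metis

lemma pd_eqI:
  assumes "((\<lambda>t. F (x + t *\<^sub>R ax i)) has_vector_derivative D) (at 0)"
  shows "partial_dir i F x = D"
  using assms unfolding partial_dir_def by (simp add: vector_derivative_at)


fun pairs :: "'n list \<Rightarrow> ('n list \<times> 'n list) list" where
  "pairs [] = [([],[])]"
| "pairs (i#ds) = map (\<lambda>(a,b). (i#a,b)) (pairs ds) @ map (\<lambda>(a,b). (a,i#b)) (pairs ds)"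

definition LS :: "(real^'n::finite \<Rightarrow> complex) \<Rightarrow> (real^'n \<Rightarrow> complex) \<Rightarrow> ('n list \<times> 'n list) list \<Rightarrow> real^'n \<Rightarrow> complex" where
  "LS f g P y = sum_list (map (\<lambda>(a,b). dpart a f y * dpart b g y) P)"

lemma hvd_sum_list:
  "(\<And>e. e \<in> set xs \<Longrightarrow> ((\<lambda>t. F e t) has_vector_derivative F' e) net) \<Longrightarrow>
   ((\<lambda>t. sum_list (map (\<lambda>e. F e t) xs)) has_vector_derivative sum_list (map F' xs)) net"
  by (induction xs) (auto intro!: has_vector_derivative_add)

lemma LS_line:
  assumes f: "smooth_fun_on U f" and g: "smooth_fun_on U g" and x: "x \<in> U"
  shows "((\<lambda>t. LS f g P (x + t *\<^sub>R ax i)) has_vector_derivative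
     LS f g (map (\<lambda>(a,b). (i#a,b)) P) x + LS f g (map (\<lambda>(a,b). (a,i#b)) P) x) (at 0)"
proof -
  have "((\<lambda>t. sum_list (map (\<lambda>e. (\<lambda>(a,b). dpart a f (x + t *\<^sub>R ax i) * dpart b g (x + t *\<^sub>R ax i)) e) P))
     has_vector_derivative sum_list (map (\<lambda>(a,b). dpart a f x * dpart (i#b) g x + dpart (i#a) f x * dpart b g x) P)) (at 0)"
  proof (rule hvd_sum_list)
    fix e assume "e \<in> set P"
    obtain a b where e: "e = (a,b)" by (cases e)
    have "((\<lambda>t. dpart a f (x + t *\<^sub>R ax i) * dpart b g (x + t *\<^sub>R ax i)) has_vector_derivative
       (dpart a f (x + 0 *\<^sub>R ax i) * dpart (i#b) g x + dpart (i#a) f x * dpart b g (x + 0 *\<^sub>R ax i))) (at 0)"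
      by (rule has_vector_derivative_mult[OF smoothD[OF f x] smoothD[OF g x]])
    then show "((\<lambda>t. (\<lambda>(a,b). dpart a f (x + t *\<^sub>R ax i) * dpart b g (x + t *\<^sub>R ax i)) e) has_vector_derivative
       (\<lambda>(a,b). dpart a f x * dpart (i#b) g x + dpart (i#a) f x * dpart b g x) e) (at 0)"
      by (simp add: e)
  qed
  moreover have "sum_list (map (\<lambda>(a,b). dpart a f x * dpart (i#b) g x + dpart (i#a) f x * dpart b g x) P)
     = LS f g (map (\<lambda>(a,b). (i#a,b)) P) x + LS f g (map (\<lambda>(a,b). (a,i#b)) P) x"
    unfolding LS_def by (induction P) (auto simp: algebra_simps)
  ultimately show ?thesis unfolding LS_def by simp
qed

lemma LS_cont:
  assumes f: "smooth_fun_on U f" and g: "smooth_fun_on U g"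
  shows "continuous_on U (LS f g P)"
  unfolding LS_def
proof (induction P)
  case Nil then show ?case by (simp add: continuous_on_const)
next
  case (Cons e P)
  obtain a b where e: "e = (a,b)" by (cases e)
  have "continuous_on U (\<lambda>y. dpart a f y * dpart b g y)"
    by (intro continuous_on_mult smoothC[OF f] smoothC[OF g])
  then show ?case using Cons by (simp add: e continuous_on_add)
qed

lemma leibniz:
  assumes U: "open U" and f: "smooth_fun_on U f" and g: "smooth_fun_on U g"
  shows "x \<in> U \<Longrightarrow> dpart ds (\<lambda>y. f y * g y) x = LS f g (pairs ds) x"
proof (induction ds arbitrary: x)
  case Nil then show ?case by (simp add: LS_def)
next
  case (Cons i ds)
  have "dpart (i#ds) (\<lambda>y. f y * g y) x = partial_dir i (LS f g (pairs ds)) x"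
    using partial_dir_local[OF U Cons.prems, of "dpart ds (\<lambda>y. f y * g y)" "LS f g (pairs ds)"] Cons.IH by simp
  also have "\<dots> = LS f g (map (\<lambda>(a,b). (i#a,b)) (pairs ds)) x + LS f g (map (\<lambda>(a,b). (a,i#b)) (pairs ds)) x"
    by (rule pd_eqI[OF LS_line[OF f g Cons.prems, of "pairs ds" i]])
  also have "\<dots> = LS f g (pairs (i#ds)) x" by (simp add: LS_def)
  finally show ?case .
qed

lemma transfer_line:
  assumes U: "open U" and x: "x \<in> U" and eq: "\<And>y. y \<in> U \<Longrightarrow> F y = G y"
    and h: "((\<lambda>t. G (x + t *\<^sub>R ax i)) has_vector_derivative D) (at 0)"
  shows "((\<lambda>t. F (x + t *\<^sub>R ax i)) has_vector_derivative D) (at 0)"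
  by (rule has_vector_derivative_transform_within_open[OF h open_line_pre[OF U, of x "ax i"]]) (use x eq in auto)

lemma smooth_mult:
  assumes U: "open U" and f: "smooth_fun_on U f" and g: "smooth_fun_on U g"
  shows "smooth_fun_on U (\<lambda>y. f y * g y)"
proof (rule smoothI)
  fix ds
  show "continuous_on U (dpart ds (\<lambda>y. f y * g y))"
    using continuous_on_eq[OF LS_cont[OF f g, of "pairs ds"]] leibniz[OF U f g] by metis
next
  fix ds i x assume x: "x \<in> U"
  show "\<exists>D. ((\<lambda>t. dpart ds (\<lambda>y. f y * g y) (x + t *\<^sub>R ax i)) has_vector_derivative D) (at 0)"
    using transfer_line[OF U x leibniz[OF U f g] LS_line[OF f g x]] by blast
qed

lemma dpart_add:
  assumes U: "open U" and f: "smooth_fun_on U f" and g: "smooth_fun_on U g"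
  shows "x \<in> U \<Longrightarrow> dpart ds (\<lambda>y. f y + g y) x = dpart ds f x + dpart ds g x"
proof (induction ds arbitrary: x)
  case Nil then show ?case by simp
next
  case (Cons i ds)
  have "dpart (i#ds) (\<lambda>y. f y + g y) x = partial_dir i (\<lambda>y. dpart ds f y + dpart ds g y) x"
    using partial_dir_local[OF U Cons.prems, of "dpart ds (\<lambda>y. f y + g y)"] Cons.IH by simp
  also have "\<dots> = dpart (i#ds) f x + dpart (i#ds) g x"
    by (rule pd_eqI, rule has_vector_derivative_add[OF smoothD[OF f Cons.prems] smoothD[OF g Cons.prems]])
  finally show ?case .
qed

lemma smooth_add:
  assumes U: "open U" and f: "smooth_fun_on U f" and g: "smooth_fun_on U g"
  shows "smooth_fun_on U (\<lambda>y. f y + g y)"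
proof (rule smoothI)
  fix ds
  show "continuous_on U (dpart ds (\<lambda>y. f y + g y))"
    using continuous_on_eq[OF continuous_on_add[OF smoothC[OF f] smoothC[OF g]]] dpart_add[OF U f g]
    by (metis (no_types, lifting))
next
  fix ds i x assume x: "x \<in> U"
  show "\<exists>D. ((\<lambda>t. dpart ds (\<lambda>y. f y + g y) (x + t *\<^sub>R ax i)) has_vector_derivative D) (at 0)"
    using transfer_line[OF U x dpart_add[OF U f g] has_vector_derivative_add[OF smoothD[OF f x] smoothD[OF g x]]] by blast
qed

lemma dpart_cmult:
  assumes U: "open U" and f: "smooth_fun_on U f"
  shows "x \<in> U \<Longrightarrow> dpart ds (\<lambda>y. c * f y) x = c * dpart ds f x"
proof (induction ds arbitrary: x)
  case Nil then show ?case by simp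
next
  case (Cons i ds)
  have "dpart (i#ds) (\<lambda>y. c * f y) x = partial_dir i (\<lambda>y. c * dpart ds f y) x"
    using partial_dir_local[OF U Cons.prems, of "dpart ds (\<lambda>y. c * f y)"] Cons.IH by simp
  also have "\<dots> = c * dpart (i#ds) f x"
    by (rule pd_eqI, rule has_vector_derivative_mult_right[OF smoothD[OF f Cons.prems]])
  finally show ?case .
qed

lemma smooth_cmult:
  assumes U: "open U" and f: "smooth_fun_on U f"
  shows "smooth_fun_on U (\<lambda>y. c * f y)"
proof (rule smoothI)
  fix ds
  show "continuous_on U (dpart ds (\<lambda>y. c * f y))"
    using continuous_on_eq[OF continuous_on_mult[OF continuous_on_const smoothC[OF f]]] dpart_cmult[OF U f]
    by (metis (no_types, lifting))
next
  fix ds i x assume x: "x \<in> U"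
  show "\<exists>D. ((\<lambda>t. dpart ds (\<lambda>y. c * f y) (x + t *\<^sub>R ax i)) has_vector_derivative D) (at 0)"
    using transfer_line[OF U x dpart_cmult[OF U f] has_vector_derivative_mult_right[OF smoothD[OF f x]]] by blast
qed


abbreviation S :: "nat \<Rightarrow> (real^'n::finite \<Rightarrow> complex) \<Rightarrow> real" where
  "S \<equiv> schwartz_seminorm_sum"

lemma schwartz_bdd:
  assumes "g \<in> schwartz"
  shows "bdd_above (range (\<lambda>x. (1 + norm x) ^ k * norm (dpart ds g x)))"
proof -
  have "bounded (range (\<lambda>x. (1 + norm x) ^ k * norm (dpart ds g x)))"
    using assms unfolding schwartz_def by auto
  then show ?thesis by (rule bounded_imp_bdd_above)
qed

lemma semi_upper:
  assumes "g \<in> schwartz"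
  shows "(1 + norm x) ^ k * norm (dpart ds g x) \<le> schwartz_seminorm k ds g"
  unfolding schwartz_seminorm_def by (rule cSUP_upper[OF _ schwartz_bdd[OF assms]]) simp

lemma semi_nonneg: "g \<in> schwartz \<Longrightarrow> 0 \<le> schwartz_seminorm k ds g"
  using semi_upper[of g 0 k ds] by (smt (verit) mult_nonneg_nonneg norm_ge_zero zero_le_power)

lemma semi_least:
  assumes "\<And>x. (1 + norm x) ^ k * norm (dpart ds g x) \<le> B"
  shows "schwartz_seminorm k ds g \<le> B"
  unfolding schwartz_seminorm_def by (rule cSUP_least) (use assms in auto)

lemma semi_upper0:
  assumes "g \<in> schwartz"
  shows "norm (dpart ds g x) \<le> schwartz_seminorm 0 ds g"
  using semi_upper[OF assms, of x 0 ds] by simp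

lemma finite_lists_le: "finite {ds :: 'n::finite list. length ds \<le> N}"
  using finite_lists_length_le[of "UNIV :: 'n set" N] by simp

lemma S_nonneg: "g \<in> schwartz \<Longrightarrow> 0 \<le> S N g"
  unfolding schwartz_seminorm_sum_def by (intro sum_nonneg semi_nonneg)

lemma semi_le_S:
  assumes "g \<in> schwartz" "k \<le> N" "length ds \<le> N"
  shows "schwartz_seminorm k ds g \<le> S N g"
proof -
  have "schwartz_seminorm k ds g \<le> (\<Sum>ds\<in>{ds :: 'a list. length ds \<le> N}. schwartz_seminorm k ds g)"
    by (rule member_le_sum) (use assms finite_lists_le semi_nonneg in auto)
  also have "\<dots> \<le> S N g"
    unfolding schwartz_seminorm_sum_def
    by (rule member_le_sum[where f = "\<lambda>k. \<Sum>ds\<in>{ds :: 'a list. length ds \<le> N}. schwartz_seminorm k ds g"])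
       (use assms semi_nonneg in \<open>auto intro!: sum_nonneg\<close>)
  finally show ?thesis .
qed

lemma S_mono:
  assumes "g \<in> schwartz" "N \<le> N'"
  shows "S N g \<le> S N' g"
proof -
  have "S N g \<le> (\<Sum>k\<le>N. \<Sum>ds\<in>{ds :: 'a list. length ds \<le> N'}. schwartz_seminorm k ds g)"
    unfolding schwartz_seminorm_sum_def
    by (intro sum_mono sum_mono2 finite_lists_le) (use assms semi_nonneg in auto)
  also have "\<dots> \<le> S N' g"
    unfolding schwartz_seminorm_sum_def
    by (intro sum_mono2) (use assms semi_nonneg in \<open>auto intro!: sum_nonneg\<close>)
  finally show ?thesis .
qed

lemma sum_bound:
  assumes "finite A" "G \<subseteq> schwartz" "\<forall>e\<in>A. \<exists>C N. \<forall>g\<in>G. F e g \<le> C * S N g"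
  shows "\<exists>C N. \<forall>g\<in>G. (\<Sum>e\<in>A. F e g) \<le> C * S N g"
  using assms(1,3)
proof (induction A rule: finite_induct)
  case empty
  then show ?case using assms(2) S_nonneg by (intro exI[of _ 0]) auto
next
  case (insert e A)
  obtain C1 N1 where 1: "\<forall>g\<in>G. F e g \<le> C1 * S N1 g" using insert by auto
  obtain C2 N2 where 2: "\<forall>g\<in>G. (\<Sum>e\<in>A. F e g) \<le> C2 * S N2 g" using insert by auto
  show ?case
  proof (intro exI ballI)
    fix g assume g: "g \<in> G"
    then have gs: "g \<in> schwartz" using assms(2) by auto
    have a: "C1 * S N1 g \<le> max C1 0 * S (max N1 N2) g"
      using S_mono[OF gs, of N1 "max N1 N2"] S_nonneg[OF gs, of N1]
      by (smt (verit) max.cobounded1 mult_left_mono mult_right_mono)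
    have b: "C2 * S N2 g \<le> max C2 0 * S (max N1 N2) g"
      using S_mono[OF gs, of N2 "max N1 N2"] S_nonneg[OF gs, of N2]
      by (smt (verit) max.cobounded2 mult_left_mono mult_right_mono)
    show "(\<Sum>e\<in>insert e A. F e g) \<le> (max C1 0 + max C2 0) * S (max N1 N2) g"
    proof -
      have "(\<Sum>e\<in>insert e A. F e g) = F e g + (\<Sum>e\<in>A. F e g)" using insert.hyps by simp
      moreover have "F e g \<le> C1 * S N1 g" "(\<Sum>e\<in>A. F e g) \<le> C2 * S N2 g" using 1 2 g by auto
      ultimately show ?thesis using a b by (simp add: distrib_right)
    qed
  qed
qed

lemma schwartz_smooth: "g \<in> schwartz \<Longrightarrow> smooth_fun_on UNIV g"
  unfolding schwartz_def by auto

lemma schwartzI: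
  assumes "smooth_fun_on UNIV g" "\<And>ds k. \<exists>B. \<forall>x. (1 + norm x) ^ k * norm (dpart ds g x) \<le> B"
  shows "g \<in> schwartz"
  unfolding schwartz_def
proof (safe intro!: assms(1))
  fix ds k
  obtain B where "\<forall>x. (1 + norm x) ^ k * norm (dpart ds g x) \<le> B" using assms(2) by blast
  then show "bounded (range (\<lambda>x. (1 + norm x) ^ k * norm (dpart ds g x)))"
    unfolding bounded_iff by (intro exI[of _ B]) auto
qed

lemma schwartz_add:
  assumes f: "f \<in> schwartz" and g: "g \<in> schwartz"
  shows "(\<lambda>x. f x + g x) \<in> schwartz"
proof (rule schwartzI)
  show "smooth_fun_on UNIV (\<lambda>x. f x + g x)"
    by (rule smooth_add[OF open_UNIV schwartz_smooth[OF f] schwartz_smooth[OF g]])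
  fix ds k
  show "\<exists>B. \<forall>x. (1 + norm x) ^ k * norm (dpart ds (\<lambda>x. f x + g x) x) \<le> B"
  proof (intro exI allI)
    fix x
    have "(1 + norm x) ^ k * norm (dpart ds (\<lambda>x. f x + g x) x)
        \<le> (1 + norm x) ^ k * norm (dpart ds f x) + (1 + norm x) ^ k * norm (dpart ds g x)"
      using dpart_add[OF open_UNIV schwartz_smooth[OF f] schwartz_smooth[OF g]]
      by (simp add: distrib_left[symmetric] mult_left_mono norm_triangle_ineq)
    also have "\<dots> \<le> schwartz_seminorm k ds f + schwartz_seminorm k ds g"
      using semi_upper[OF f] semi_upper[OF g] by (intro add_mono) auto
    finally show "(1 + norm x) ^ k * norm (dpart ds (\<lambda>x. f x + g x) x) \<le> schwartz_seminorm k ds f + schwartz_seminorm k ds g" .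
  qed
qed

lemma semi_add:
  assumes f: "f \<in> schwartz" and g: "g \<in> schwartz"
  shows "schwartz_seminorm k ds (\<lambda>x. f x + g x) \<le> schwartz_seminorm k ds f + schwartz_seminorm k ds g"
proof (rule semi_least)
  fix x
  have "(1 + norm x) ^ k * norm (dpart ds (\<lambda>x. f x + g x) x)
      \<le> (1 + norm x) ^ k * norm (dpart ds f x) + (1 + norm x) ^ k * norm (dpart ds g x)"
    using dpart_add[OF open_UNIV schwartz_smooth[OF f] schwartz_smooth[OF g]]
    by (simp add: distrib_left[symmetric] mult_left_mono norm_triangle_ineq)
  also have "\<dots> \<le> schwartz_seminorm k ds f + schwartz_seminorm k ds g"
    using semi_upper[OF f] semi_upper[OF g] by (intro add_mono) auto
  finally show "(1 + norm x) ^ k * norm (dpart ds (\<lambda>x. f x + g x) x) \<le> schwartz_seminorm k ds f + schwartz_seminorm k ds g" .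
qed

lemma schwartz_cmult:
  assumes f: "f \<in> schwartz"
  shows "(\<lambda>x. c * f x) \<in> schwartz"
proof (rule schwartzI)
  show "smooth_fun_on UNIV (\<lambda>x. c * f x)"
    by (rule smooth_cmult[OF open_UNIV schwartz_smooth[OF f]])
  fix ds k
  show "\<exists>B. \<forall>x. (1 + norm x) ^ k * norm (dpart ds (\<lambda>x. c * f x) x) \<le> B"
  proof (intro exI allI)
    fix x
    have "(1 + norm x) ^ k * norm (dpart ds (\<lambda>x. c * f x) x) = norm c * ((1 + norm x) ^ k * norm (dpart ds f x))"
      using dpart_cmult[OF open_UNIV schwartz_smooth[OF f]] by (simp add: norm_mult)
    also have "\<dots> \<le> norm c * schwartz_seminorm k ds f"
      using semi_upper[OF f] by (intro mult_left_mono) auto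
    finally show "(1 + norm x) ^ k * norm (dpart ds (\<lambda>x. c * f x) x) \<le> norm c * schwartz_seminorm k ds f" .
  qed
qed

lemma semi_cmult_le:
  assumes f: "f \<in> schwartz"
  shows "schwartz_seminorm k ds (\<lambda>x. c * f x) \<le> norm c * schwartz_seminorm k ds f"
proof (rule semi_least)
  fix x
  have "(1 + norm x) ^ k * norm (dpart ds (\<lambda>x. c * f x) x) = norm c * ((1 + norm x) ^ k * norm (dpart ds f x))"
    using dpart_cmult[OF open_UNIV schwartz_smooth[OF f]] by (simp add: norm_mult)
  also have "\<dots> \<le> norm c * schwartz_seminorm k ds f"
    using semi_upper[OF f] by (intro mult_left_mono) auto
  finally show "(1 + norm x) ^ k * norm (dpart ds (\<lambda>x. c * f x) x) \<le> norm c * schwartz_seminorm k ds f" .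
qed

lemma semi_cmult:
  assumes f: "f \<in> schwartz"
  shows "schwartz_seminorm k ds (\<lambda>x. c * f x) = norm c * schwartz_seminorm k ds f"
proof (cases "c = 0")
  case True
  then show ?thesis using semi_cmult_le[OF f, of k ds c] semi_nonneg[OF schwartz_cmult[OF f, of c], of k ds]
    by simp
next
  case False
  have "(\<lambda>x. inverse c * (c * f x)) = f" using False by (auto simp: fun_eq_iff)
  then have "schwartz_seminorm k ds f = schwartz_seminorm k ds (\<lambda>x. inverse c * (c * f x))"
    by simp
  also have "\<dots> \<le> norm (inverse c) * schwartz_seminorm k ds (\<lambda>x. c * f x)"
    by (rule semi_cmult_le[OF schwartz_cmult[OF f]])
  finally have h: "schwartz_seminorm k ds f \<le> inverse (norm c) * schwartz_seminorm k ds (\<lambda>x. c * f x)"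
    by (simp add: norm_inverse)
  have "norm c * schwartz_seminorm k ds f \<le> norm c * (inverse (norm c) * schwartz_seminorm k ds (\<lambda>x. c * f x))"
    by (rule mult_left_mono[OF h]) simp
  moreover have "norm c * (inverse (norm c) * schwartz_seminorm k ds (\<lambda>x. c * f x)) = schwartz_seminorm k ds (\<lambda>x. c * f x)"
    using False by (simp add: mult.assoc[symmetric])
  ultimately have "norm c * schwartz_seminorm k ds f \<le> schwartz_seminorm k ds (\<lambda>x. c * f x)"
    by linarith
  then show ?thesis using semi_cmult_le[OF f, of k ds c] by simp
qed

lemma S_add:
  assumes f: "f \<in> schwartz" and g: "g \<in> schwartz"
  shows "S N (\<lambda>x. f x + g x) \<le> S N f + S N g"
  unfolding schwartz_seminorm_sum_def sum.distrib[symmetric]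
  by (intro sum_mono semi_add f g)

lemma S_cmult:
  assumes f: "f \<in> schwartz"
  shows "S N (\<lambda>x. c * f x) = norm c * S N f"
  unfolding schwartz_seminorm_sum_def sum_distrib_left semi_cmult[OF f] by simp

lemma s00_add:
  assumes f: "f \<in> schwartz00" and g: "g \<in> schwartz00"
  shows "(\<lambda>x. f x + g x) \<in> schwartz00"
  using assms schwartz_add[of f g] dpart_add[OF open_UNIV schwartz_smooth schwartz_smooth, of f g]
  unfolding schwartz00_def by auto

lemma s00_cmult:
  assumes f: "f \<in> schwartz00"
  shows "(\<lambda>x. c * f x) \<in> schwartz00"
  using assms schwartz_cmult[of f c] dpart_cmult[OF open_UNIV schwartz_smooth, of f _ _ c]
  unfolding schwartz00_def by auto


lemma line_mvt_bound:
  fixes \<phi> :: "real \<Rightarrow> complex"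
  assumes d: "\<And>t. t \<in> closed_segment 0 s \<Longrightarrow> (\<phi> has_vector_derivative \<phi>' t) (at t)"
    and b: "\<And>t. t \<in> closed_segment 0 s \<Longrightarrow> norm (\<phi>' t) \<le> B"
  shows "norm (\<phi> s - \<phi> 0) \<le> B * \<bar>s\<bar>"
proof -
  have "norm (\<phi> s - \<phi> 0) \<le> B * norm (s - 0)"
  proof (rule differentiable_bound[where f' = "\<lambda>t h. h *\<^sub>R \<phi>' t"])
    show "convex (closed_segment 0 s)" by simp
    fix t assume t: "t \<in> closed_segment 0 s"
    show "(\<phi> has_derivative (\<lambda>h. h *\<^sub>R \<phi>' t)) (at t within closed_segment 0 s)"
      using d[OF t] unfolding has_vector_derivative_def by (rule has_derivative_at_withinI)
    have "onorm (\<lambda>h::real. h *\<^sub>R \<phi>' t) = onorm (\<lambda>h::real. h) * norm (\<phi>' t)"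
      by (rule onorm_scaleR_left) (rule bounded_linear_ident)
    then show "onorm (\<lambda>h::real. h *\<^sub>R \<phi>' t) \<le> B" using b[OF t] by (simp add: onorm_id)
  qed auto
  then show ?thesis by simp
qed

definition proj :: "'n::finite set \<Rightarrow> real^'n \<Rightarrow> real^'n" where
  "proj A y = (\<chi> i. if i \<in> A then y$i else 0)"

lemma proj_insert: "proj (insert j A) y = proj A y + (y$j) *\<^sub>R ax j" if "j \<notin> A"
  using that unfolding proj_def by (auto simp: vec_eq_iff axis_def)

lemma proj_line_norm:
  assumes "j \<notin> A" "t \<in> closed_segment 0 (y$j)"
  shows "norm (proj A y + t *\<^sub>R ax j) \<le> norm y"
proof (rule norm_le_componentwise_cart)
  fix i
  have "\<bar>t\<bar> \<le> \<bar>y$j\<bar>" using assms(2) by (auto simp: closed_segment_eq_real_ivl split: if_splits)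
  then show "norm ((proj A y + t *\<^sub>R ax j) $ i) \<le> norm (y $ i)"
    using assms(1) unfolding proj_def by (auto simp: axis_def)
qed

lemma s00_decay:
  fixes g :: "real^'n::finite \<Rightarrow> complex"
  assumes g: "g \<in> schwartz00"
  shows "norm (dpart ds g y) \<le> real CARD('n) ^ k * norm y ^ k * S (k + length ds) g"
proof (induction k arbitrary: ds y)
  case 0
  have gs: "g \<in> schwartz" using g unfolding schwartz00_def by auto
  show ?case using semi_upper0[OF gs, of ds y] semi_le_S[OF gs, of 0 "length ds" ds] by simp
next
  case (Suc k)
  have gs: "g \<in> schwartz" using g unfolding schwartz00_def by auto
  have g0: "dpart ds g 0 = 0" using g unfolding schwartz00_def by auto
  have sm: "smooth_fun_on UNIV g" using gs by (rule schwartz_smooth)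
  define M where "M = real CARD('n) ^ k * norm y ^ k * S (Suc k + length ds) g"
  have M0: "0 \<le> M" unfolding M_def using S_nonneg[OF gs] by simp
  have step: "norm (dpart ds g (proj A y)) \<le> real (card A) * norm y * M" if "finite A" for A
    using that
  proof (induction A rule: finite_induct)
    case empty
    have "proj {} y = 0" unfolding proj_def by (simp add: vec_eq_iff)
    then show ?case using g0 by simp
  next
    case (insert j A)
    let ?p = "proj A y"
    have "norm (dpart ds g (?p + (y$j) *\<^sub>R ax j) - dpart ds g (?p + 0 *\<^sub>R ax j)) \<le> M * \<bar>y$j\<bar>"
    proof (rule line_mvt_bound[where \<phi> = "\<lambda>t. dpart ds g (?p + t *\<^sub>R ax j)"])
      fix t assume t: "t \<in> closed_segment 0 (y$j)"
      have "(\<lambda>s. dpart ds g ((?p + t *\<^sub>R ax j) + s *\<^sub>R ax j)) differentiable (at 0)"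
        using sm unfolding smooth_fun_on_def by auto
      then show "((\<lambda>t. dpart ds g (?p + t *\<^sub>R ax j)) has_vector_derivative dpart (j#ds) g (?p + t *\<^sub>R ax j)) (at t)"
        using line_hvd_at[of "dpart ds g" ?p t j] by simp
      have "norm (dpart (j#ds) g (?p + t *\<^sub>R ax j)) \<le> real CARD('n) ^ k * norm (?p + t *\<^sub>R ax j) ^ k * S (k + length (j#ds)) g"
        by (rule Suc.IH)
      also have "\<dots> \<le> M"
        unfolding M_def using proj_line_norm[OF insert.hyps(2) t] S_nonneg[OF gs]
        by (auto intro!: mult_right_mono mult_left_mono power_mono)
      finally show "norm (dpart (j#ds) g (?p + t *\<^sub>R ax j)) \<le> M" .
    qed
    then have "norm (dpart ds g (proj (insert j A) y) - dpart ds g ?p) \<le> M * norm y"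
      using proj_insert[OF insert.hyps(2)] component_le_norm_cart[of y j] M0
      by (smt (verit, best) add.right_neutral mult_left_mono scale_zero_left)
    then have "norm (dpart ds g (proj (insert j A) y)) \<le> norm (dpart ds g ?p) + M * norm y"
      by (smt (verit) norm_triangle_ineq2)
    moreover have "real (card (insert j A)) * norm y * M = M * norm y + real (card A) * norm y * M"
      using insert.hyps by (simp add: distrib_right)
    ultimately show ?case using insert.IH by linarith
  qed
  have "proj UNIV y = y" unfolding proj_def by (simp add: vec_eq_iff)
  then have "norm (dpart ds g y) \<le> real CARD('n) * norm y * M" using step[of UNIV] by simp
  then show ?case unfolding M_def by (simp add: ac_simps)
qed


lemma r1: fixes r L1 L2 :: real assumes "0 < r" "r \<le> 1" "0 \<le> L1" "0 \<le> L2" "L1 \<le> real N"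
  shows "max (r powr (-L1)) (r powr L2) * r ^ N \<le> 1"
proof -
  have a: "r powr L2 \<le> 1" using assms by (simp add: powr_le1)
  have b: "1 \<le> r powr (-L1)" using assms by (simp add: powr_minus_divide powr_le1)
  have "max (r powr (-L1)) (r powr L2) = r powr (-L1)" using a b by simp
  moreover have "r powr (-L1) * r ^ N = r powr (real N - L1)"
    using assms by (simp add: powr_realpow[symmetric] powr_add[symmetric])
  moreover have "r powr (real N - L1) \<le> 1" using assms by (simp add: powr_le1)
  ultimately show ?thesis by simp
qed

lemma r2: fixes r L1 L2 :: real assumes "1 \<le> r" "0 \<le> L1" "0 \<le> L2" "L2 \<le> real N"
  shows "max (r powr (-L1)) (r powr L2) \<le> r ^ N"
proof -
  have a: "r powr (-L1) \<le> 1" using assms ge_one_powr_ge_zero[of r L1] by (simp add: powr_minus inverse_le_1_iff)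
  have b: "r powr L2 \<le> r powr (real N)" using assms by (simp add: powr_mono)
  show ?thesis using a b assms by (smt (verit) ge_one_powr_ge_zero powr_realpow)
qed

abbreviation mg :: "(real^'n::finite \<Rightarrow> complex) \<Rightarrow> (real^'n \<Rightarrow> complex) \<Rightarrow> real^'n \<Rightarrow> complex" where
  "mg m g \<equiv> (\<lambda>\<xi>. if \<xi> = 0 then 0 else m \<xi> * g \<xi>)"

lemma smooth_sub: "smooth_fun_on UNIV g \<Longrightarrow> smooth_fun_on U g"
  unfolding smooth_fun_on_def by (auto intro: continuous_on_subset)

lemma LS_norm:
  "norm (LS f g P y) \<le> (\<Sum>i<length P. norm (dpart (fst (P!i)) f y) * norm (dpart (snd (P!i)) g y))"
  unfolding LS_def
proof (induction P)
  case Nil then show ?case by simp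
next
  case (Cons e P)
  obtain a b where e: "e = (a,b)" by (cases e)
  have "norm (\<Sum>(a, b)\<leftarrow>e # P. dpart a f y * dpart b g y) \<le>
      norm (dpart a f y * dpart b g y) + norm (\<Sum>(a, b)\<leftarrow>P. dpart a f y * dpart b g y)"
    by (simp add: e norm_triangle_ineq)
  also have "\<dots> \<le> norm (dpart a f y) * norm (dpart b g y) + (\<Sum>i<length P. norm (dpart (fst (P!i)) f y) * norm (dpart (snd (P!i)) g y))"
    using Cons by (simp add: norm_mult)
  also have "\<dots> = (\<Sum>i<length (e#P). norm (dpart (fst ((e#P)!i)) f y) * norm (dpart (snd ((e#P)!i)) g y))"
    unfolding length_Cons sum.lessThan_Suc_shift by (simp add: e)
  finally show ?case .
qed

lemma sum_bound2:
  assumes "finite A" "\<forall>z\<in>Z. \<pi> z \<in> schwartz" "\<forall>e\<in>A. \<exists>C N. \<forall>z\<in>Z. F e z \<le> C * S N (\<pi> z)"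
  shows "\<exists>C N. \<forall>z\<in>Z. (\<Sum>e\<in>A. F e z) \<le> C * S N (\<pi> z)"
  using assms(1,3)
proof (induction A rule: finite_induct)
  case empty
  then show ?case using assms(2) S_nonneg by (intro exI[of _ 0]) auto
next
  case (insert e A)
  obtain C1 N1 where 1: "\<forall>z\<in>Z. F e z \<le> C1 * S N1 (\<pi> z)" using insert by auto
  obtain C2 N2 where 2: "\<forall>z\<in>Z. (\<Sum>e\<in>A. F e z) \<le> C2 * S N2 (\<pi> z)" using insert by auto
  show ?case
  proof (intro exI ballI)
    fix z assume g: "z \<in> Z"
    then have gs: "\<pi> z \<in> schwartz" using assms(2) by auto
    have a: "C1 * S N1 (\<pi> z) \<le> max C1 0 * S (max N1 N2) (\<pi> z)"
      using S_mono[OF gs, of N1 "max N1 N2"] S_nonneg[OF gs, of N1]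
      by (smt (verit) max.cobounded1 mult_left_mono mult_right_mono)
    have b: "C2 * S N2 (\<pi> z) \<le> max C2 0 * S (max N1 N2) (\<pi> z)"
      using S_mono[OF gs, of N2 "max N1 N2"] S_nonneg[OF gs, of N2]
      by (smt (verit) max.cobounded2 mult_left_mono mult_right_mono)
    show "(\<Sum>e\<in>insert e A. F e z) \<le> (max C1 0 + max C2 0) * S (max N1 N2) (\<pi> z)"
    proof -
      have "(\<Sum>e\<in>insert e A. F e z) = F e z + (\<Sum>e\<in>A. F e z)" using insert.hyps by simp
      moreover have "F e z \<le> C1 * S N1 (\<pi> z)" "(\<Sum>e\<in>A. F e z) \<le> C2 * S N2 (\<pi> z)" using 1 2 g by auto
      ultimately show ?thesis using a b by (simp add: distrib_right)
    qed
  qed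
qed

context
  fixes m :: "real^'n::finite \<Rightarrow> complex"
  assumes sm: "smooth_fun_on (UNIV - {0}) m"
    and gr: "\<forall>ds. \<exists>L1 L2 C. L1 \<ge> 0 \<and> L2 \<ge> 0 \<and>
        (\<forall>\<xi>. \<xi> \<noteq> 0 \<longrightarrow> norm (dpart ds m \<xi>) \<le> C * max (norm \<xi> powr (- L1)) (norm \<xi> powr L2))"
begin

lemma m_bound:
  "\<exists>C N1 N2. C \<ge> 0 \<and> (\<forall>y. y \<noteq> 0 \<longrightarrow> (norm y \<le> 1 \<longrightarrow> norm (dpart a m y) * norm y ^ N1 \<le> C) \<and>
        (1 \<le> norm y \<longrightarrow> norm (dpart a m y) \<le> C * norm y ^ N2))"
proof -
  obtain L1 L2 C where L: "L1 \<ge> 0" "L2 \<ge> 0"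
    and b: "\<And>\<xi>. \<xi> \<noteq> 0 \<Longrightarrow> norm (dpart a m \<xi>) \<le> C * max (norm \<xi> powr (- L1)) (norm \<xi> powr L2)"
    using gr by blast
  define N1 where "N1 = nat \<lceil>L1\<rceil>"
  define N2 where "N2 = nat \<lceil>L2\<rceil>"
  have N1: "L1 \<le> real N1" unfolding N1_def by linarith
  have N2: "L2 \<le> real N2" unfolding N2_def by linarith
  show ?thesis
  proof (intro exI conjI allI impI)
    show "0 \<le> \<bar>C\<bar>" by simp
    fix y :: "real^'n" assume y: "y \<noteq> 0"
    have b': "norm (dpart a m y) \<le> \<bar>C\<bar> * max (norm y powr (- L1)) (norm y powr L2)"
      using b[OF y] by (smt (verit) abs_ge_self max.cobounded2 mult_right_mono powr_ge_zero)
    {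
      assume "norm y \<le> 1"
      then have r: "max (norm y powr (-L1)) (norm y powr L2) * norm y ^ N1 \<le> 1"
        using r1[OF _ _ L N1] y by simp
      have "norm (dpart a m y) * norm y ^ N1 \<le> \<bar>C\<bar> * max (norm y powr (- L1)) (norm y powr L2) * norm y ^ N1"
        using b' by (simp add: mult_right_mono)
      also have "\<dots> \<le> \<bar>C\<bar>" using r by (simp add: mult.assoc mult_left_le)
      finally show "norm (dpart a m y) * norm y ^ N1 \<le> \<bar>C\<bar>" .
    }
    {
      assume "1 \<le> norm y"
      then have "max (norm y powr (-L1)) (norm y powr L2) \<le> norm y ^ N2" using r2[OF _ L N2] by simp
      then show "norm (dpart a m y) \<le> \<bar>C\<bar> * norm y ^ N2" using b' by (smt (verit) abs_ge_zero mult_left_mono)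
    }
  qed
qed

lemma h_eq:
  assumes g: "smooth_fun_on UNIV g" and y: "y \<noteq> 0"
  shows "dpart ds (mg m g) y = LS m g (pairs ds) y"
proof -
  have U: "open (UNIV - {0::real^'n})" by auto
  have "dpart ds (mg m g) y = dpart ds (\<lambda>y. m y * g y) y"
    by (rule dpart_local[OF U]) (use y in auto)
  also have "\<dots> = LS m g (pairs ds) y"
    by (rule leibniz[OF U sm smooth_sub[OF g]]) (use y in auto)
  finally show ?thesis .
qed

end


lemma pair_w:
  fixes A B r C Sa Sb SB n :: real
  assumes nn: "A \<ge> 0" "B \<ge> 0" "r \<ge> 0" "C \<ge> 0" "n \<ge> 0" "Sa \<ge> 0"
    and near: "r \<le> 1 \<Longrightarrow> A * r ^ N1 \<le> C" and far: "1 \<le> r \<Longrightarrow> A \<le> C * r ^ N2"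
    and Bnear: "B \<le> n ^ N1 * r ^ N1 * Sa" and Bfar: "(1 + r) ^ (k + N2) * B \<le> Sb"
    and S: "Sa \<le> SB" "Sb \<le> SB"
  shows "(1 + r) ^ k * (A * B) \<le> C * (2 ^ k * n ^ N1 + 1) * SB"
proof (cases "r \<le> 1")
  case True
  have "A * B \<le> A * (n ^ N1 * r ^ N1 * Sa)" using Bnear nn by (simp add: mult_left_mono)
  also have "\<dots> = (A * r ^ N1) * (n ^ N1 * Sa)" by (simp add: ac_simps)
  also have "\<dots> \<le> C * (n ^ N1 * Sa)" using near[OF True] nn by (simp add: mult_right_mono)
  finally have ab: "A * B \<le> C * (n ^ N1 * Sa)" .
  have pk: "(1 + r) ^ k \<le> 2 ^ k" using True nn by (intro power_mono) auto
  have "(1 + r) ^ k * (A * B) \<le> 2 ^ k * (C * (n ^ N1 * Sa))"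
    by (rule mult_mono[OF pk ab]) (use nn in auto)
  also have "\<dots> \<le> 2 ^ k * (C * (n ^ N1 * SB))"
    using S nn by (intro mult_left_mono) auto
  also have "\<dots> \<le> C * (2 ^ k * n ^ N1 + 1) * SB"
    using nn S by (simp add: algebra_simps)
  finally show ?thesis .
next
  case False
  have "A \<le> C * r ^ N2" using far False by simp
  also have "\<dots> \<le> C * (1 + r) ^ N2" using nn by (intro mult_left_mono power_mono) auto
  finally have a: "A \<le> C * (1 + r) ^ N2" .
  have "(1 + r) ^ k * (A * B) \<le> (1 + r) ^ k * (C * (1 + r) ^ N2 * B)"
    using a nn by (intro mult_left_mono mult_right_mono) auto
  also have "\<dots> = C * ((1 + r) ^ (k + N2) * B)" by (simp add: power_add ac_simps)
  also have "\<dots> \<le> C * SB" using Bfar S nn by (intro mult_left_mono) auto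
  also have "\<dots> \<le> C * (2 ^ k * n ^ N1 + 1) * SB"
    using nn S by (simp add: algebra_simps)
  finally show ?thesis .
qed

lemma pair_0:
  fixes A B r C S1 n :: real
  assumes nn: "A \<ge> 0" "B \<ge> 0" "r \<ge> 0" "C \<ge> 0" "n \<ge> 0" "S1 \<ge> 0"
    and near: "A * r ^ N1 \<le> C"
    and Bnear: "B \<le> n ^ (N1 + 2) * r ^ (N1 + 2) * S1"
  shows "A * B \<le> C * n ^ (N1 + 2) * S1 * r ^ 2"
proof -
  have "A * B \<le> A * (n ^ (N1 + 2) * r ^ (N1 + 2) * S1)" using Bnear nn by (simp add: mult_left_mono)
  also have "\<dots> = (A * r ^ N1) * (n ^ (N1 + 2) * S1 * r ^ 2)" by (simp add: power_add power2_eq_square ac_simps)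
  also have "\<dots> \<le> C * (n ^ (N1 + 2) * S1 * r ^ 2)" using near nn by (simp add: mult_right_mono)
  finally show ?thesis by (simp add: ac_simps)
qed

context
  fixes m :: "real^'n::finite \<Rightarrow> complex"
  assumes sm: "smooth_fun_on (UNIV - {0}) m"
    and gr: "\<forall>ds. \<exists>L1 L2 C. L1 \<ge> 0 \<and> L2 \<ge> 0 \<and>
        (\<forall>\<xi>. \<xi> \<noteq> 0 \<longrightarrow> norm (dpart ds m \<xi>) \<le> C * max (norm \<xi> powr (- L1)) (norm \<xi> powr L2))"
begin

lemma h_bound_w:
  "\<exists>C N. \<forall>z\<in>{(g,y). g \<in> schwartz00 \<and> y \<noteq> 0}.
     (1 + norm (snd z)) ^ k * norm (dpart ds (mg m (fst z)) (snd z)) \<le> C * S N (fst z)"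
proof -
  let ?P = "pairs ds"
  let ?Z = "{(g :: real^'n \<Rightarrow> complex,y). g \<in> schwartz00 \<and> y \<noteq> (0::real^'n)}"
  let ?F = "\<lambda>i z. (1 + norm (snd z)) ^ k * (norm (dpart (fst (?P!i)) m (snd z)) * norm (dpart (snd (?P!i)) (fst z) (snd z)))"
  have "\<exists>C N. \<forall>z\<in>?Z. (\<Sum>i<length ?P. ?F i z) \<le> C * S N (fst z)"
  proof (rule sum_bound2)
    show "\<forall>z\<in>?Z. fst z \<in> schwartz" by (auto simp: schwartz00_def)
    show "\<forall>i\<in>{..<length ?P}. \<exists>C N. \<forall>z\<in>?Z. ?F i z \<le> C * S N (fst z)"
    proof
      fix i
      define a where "a = fst (?P!i)"
      define b where "b = snd (?P!i)"
      obtain C N1 N2 where C: "C \<ge> 0" and mb: "\<And>y. y \<noteq> 0 \<Longrightarrow> (norm y \<le> 1 \<longrightarrow> norm (dpart a m y) * norm y ^ N1 \<le> C) \<and>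
        (1 \<le> norm y \<longrightarrow> norm (dpart a m y) \<le> C * norm y ^ N2)"
        using m_bound[OF sm gr, of a] by blast
      show "\<exists>C N. \<forall>z\<in>?Z. ?F i z \<le> C * S N (fst z)"
      proof (intro exI ballI)
        fix z assume z: "z \<in> ?Z"
        obtain g y where zz: "z = (g,y)" by (cases z)
        have g: "g \<in> schwartz00" and y: "y \<noteq> 0" using z zz by auto
        have gs: "g \<in> schwartz" using g by (auto simp: schwartz00_def)
        let ?SB = "S (N1 + length b + k + N2) g"
        have "(1 + norm y) ^ k * (norm (dpart a m y) * norm (dpart b g y)) \<le> C * (2 ^ k * real CARD('n) ^ N1 + 1) * ?SB"
        proof (rule pair_w[where Sa = "S (N1 + length b) g" and Sb = ?SB])
          show "norm (dpart b g y) \<le> real CARD('n) ^ N1 * norm y ^ N1 * S (N1 + length b) g"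
            by (rule s00_decay[OF g])
          show "(1 + norm y) ^ (k + N2) * norm (dpart b g y) \<le> ?SB"
            using semi_upper[OF gs, of y "k + N2" b] semi_le_S[OF gs, of "k + N2" "N1 + length b + k + N2" b] by simp
          show "S (N1 + length b) g \<le> ?SB" by (rule S_mono[OF gs]) simp
        qed (use C mb[OF y] S_nonneg[OF gs] in auto)
        then show "?F i z \<le> C * (2 ^ k * real CARD('n) ^ N1 + 1) * S (N1 + length b + k + N2) (fst z)"
          by (simp add: zz a_def b_def)
      qed
    qed
  qed simp
  then obtain C N where CN: "\<forall>z\<in>?Z. (\<Sum>i<length ?P. ?F i z) \<le> C * S N (fst z)" by blast
  show ?thesis
  proof (intro exI ballI)
    fix z assume z: "z \<in> ?Z"
    obtain g y where zz: "z = (g,y)" by (cases z)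
    have g: "g \<in> schwartz00" and y: "y \<noteq> 0" using z zz by auto
    have gs: "g \<in> schwartz" using g by (auto simp: schwartz00_def)
    have "(1 + norm y) ^ k * norm (dpart ds (mg m g) y) = (1 + norm y) ^ k * norm (LS m g ?P y)"
      using h_eq[OF sm gr schwartz_smooth[OF gs] y] by simp
    also have "\<dots> \<le> (1 + norm y) ^ k * (\<Sum>i<length ?P. norm (dpart (fst (?P!i)) m y) * norm (dpart (snd (?P!i)) g y))"
      by (intro mult_left_mono LS_norm) simp
    also have "\<dots> = (\<Sum>i<length ?P. ?F i z)" by (simp add: zz sum_distrib_left)
    also have "\<dots> \<le> C * S N (fst z)" using CN z by blast
    finally show "(1 + norm (snd z)) ^ k * norm (dpart ds (mg m (fst z)) (snd z)) \<le> C * S N (fst z)"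
      by (simp add: zz cong: if_cong)
  qed
qed

lemma h_bound_0:
  "\<exists>C N. \<forall>z\<in>{(g,y). g \<in> schwartz00 \<and> y \<noteq> 0 \<and> norm y \<le> 1}.
     norm (dpart ds (mg m (fst z)) (snd z)) \<le> C * S N (fst z) * norm (snd z) ^ 2"
proof -
  let ?P = "pairs ds"
  let ?Z = "{(g :: real^'n \<Rightarrow> complex,y). g \<in> schwartz00 \<and> y \<noteq> (0::real^'n) \<and> norm y \<le> 1}"
  let ?F = "\<lambda>i z. (norm (dpart (fst (?P!i)) m (snd z)) * norm (dpart (snd (?P!i)) (fst z) (snd z))) / norm (snd z) ^ 2"
  have "\<exists>C N. \<forall>z\<in>?Z. (\<Sum>i<length ?P. ?F i z) \<le> C * S N (fst z)"
  proof (rule sum_bound2)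
    show "\<forall>z\<in>?Z. fst z \<in> schwartz" by (auto simp: schwartz00_def)
    show "\<forall>i\<in>{..<length ?P}. \<exists>C N. \<forall>z\<in>?Z. ?F i z \<le> C * S N (fst z)"
    proof
      fix i
      define a where "a = fst (?P!i)"
      define b where "b = snd (?P!i)"
      obtain C N1 N2 where C: "C \<ge> 0" and mb: "\<And>y. y \<noteq> 0 \<Longrightarrow> (norm y \<le> 1 \<longrightarrow> norm (dpart a m y) * norm y ^ N1 \<le> C) \<and>
        (1 \<le> norm y \<longrightarrow> norm (dpart a m y) \<le> C * norm y ^ N2)"
        using m_bound[OF sm gr, of a] by blast
      show "\<exists>C N. \<forall>z\<in>?Z. ?F i z \<le> C * S N (fst z)"
      proof (intro exI ballI)
        fix z assume z: "z \<in> ?Z"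
        obtain g y where zz: "z = (g,y)" by (cases z)
        have g: "g \<in> schwartz00" and y: "y \<noteq> 0" and y1: "norm y \<le> 1" using z zz by auto
        have gs: "g \<in> schwartz" using g by (auto simp: schwartz00_def)
        have "norm (dpart a m y) * norm (dpart b g y) \<le> C * real CARD('n) ^ (N1 + 2) * S (N1 + 2 + length b) g * norm y ^ 2"
        proof (rule pair_0)
          show "norm (dpart b g y) \<le> real CARD('n) ^ (N1 + 2) * norm y ^ (N1 + 2) * S (N1 + 2 + length b) g"
            by (rule s00_decay[OF g])
        qed (use C mb[OF y] y1 S_nonneg[OF gs] in auto)
        then have "norm (dpart a m y) * norm (dpart b g y) / norm y ^ 2 \<le> C * real CARD('n) ^ (N1 + 2) * S (N1 + 2 + length b) g"
          using y by (simp add: divide_le_eq)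
        then show "?F i z \<le> C * real CARD('n) ^ (N1 + 2) * S (N1 + 2 + length b) (fst z)"
          by (simp add: zz a_def b_def)
      qed
    qed
  qed simp
  then obtain C N where CN: "\<forall>z\<in>?Z. (\<Sum>i<length ?P. ?F i z) \<le> C * S N (fst z)" by blast
  show ?thesis
  proof (intro exI ballI)
    fix z assume z: "z \<in> ?Z"
    obtain g y where zz: "z = (g,y)" by (cases z)
    have g: "g \<in> schwartz00" and y: "y \<noteq> 0" using z zz by auto
    have gs: "g \<in> schwartz" using g by (auto simp: schwartz00_def)
    have "norm (dpart ds (mg m g) y) = norm (LS m g ?P y)"
      using h_eq[OF sm gr schwartz_smooth[OF gs] y] by simp
    also have "\<dots> \<le> (\<Sum>i<length ?P. norm (dpart (fst (?P!i)) m y) * norm (dpart (snd (?P!i)) g y))"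
      by (rule LS_norm)
    also have "\<dots> = (\<Sum>i<length ?P. ?F i z) * norm y ^ 2" using y by (simp add: zz sum_distrib_right)
    also have "\<dots> \<le> C * S N (fst z) * norm y ^ 2" using CN z by (intro mult_right_mono) auto
    finally show "norm (dpart ds (mg m (fst z)) (snd z)) \<le> C * S N (fst z) * norm (snd z) ^ 2"
      by (simp add: zz cong: if_cong)
  qed
qed

end


lemma quad_deriv:
  fixes \<phi> :: "real \<Rightarrow> complex"
  assumes z: "\<phi> 0 = 0" and b: "\<And>t. t \<noteq> 0 \<Longrightarrow> \<bar>t\<bar> \<le> 1 \<Longrightarrow> norm (\<phi> t) \<le> K * t ^ 2"
  shows "(\<phi> has_vector_derivative 0) (at 0)"
  unfolding has_vector_derivative_def has_derivative_iff_norm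
proof (intro conjI)
  show "bounded_linear (\<lambda>x::real. x *\<^sub>R (0::complex))" by simp
  have ev: "\<forall>\<^sub>F y in at 0. norm (norm (\<phi> y - \<phi> 0 - (y - 0) *\<^sub>R 0) / norm (y - 0)) \<le> \<bar>K\<bar> * \<bar>y\<bar>"
    unfolding eventually_at
  proof (intro exI[of _ 1] conjI ballI impI allI)
    fix y :: real assume y: "y \<noteq> 0 \<and> dist y 0 < 1"
    have "norm (\<phi> y) \<le> K * y ^ 2" using b[of y] y by (simp add: dist_real_def)
    also have "\<dots> \<le> \<bar>K\<bar> * y ^ 2" by (rule mult_right_mono) auto
    finally have "norm (\<phi> y) \<le> \<bar>K\<bar> * y ^ 2" .
    then have "norm (\<phi> y) / \<bar>y\<bar> \<le> \<bar>K\<bar> * \<bar>y\<bar>" using y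
      by (simp add: divide_le_eq power2_eq_square abs_mult_self_eq mult.assoc[symmetric])
    then show "norm (norm (\<phi> y - \<phi> 0 - (y - 0) *\<^sub>R 0) / norm (y - 0)) \<le> \<bar>K\<bar> * \<bar>y\<bar>"
      using z by simp
  qed simp
  have "((\<lambda>y::real. \<bar>K\<bar> * \<bar>y\<bar>) \<longlongrightarrow> \<bar>K\<bar> * \<bar>0\<bar>) (at 0)"
    by (intro tendsto_intros)
  then show "((\<lambda>y. norm (\<phi> y - \<phi> 0 - (y - 0) *\<^sub>R 0) / norm (y - 0)) \<longlongrightarrow> 0) (at 0)"
    using Lim_null_comparison[OF ev] by simp
qed

lemma quad_cont:
  fixes F :: "real^'n::finite \<Rightarrow> complex"
  assumes z: "F 0 = 0" and b: "\<And>y. y \<noteq> 0 \<Longrightarrow> norm y \<le> 1 \<Longrightarrow> norm (F y) \<le> K * norm y ^ 2"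
  shows "isCont F 0"
proof -
  have ev: "\<forall>\<^sub>F y in at 0. norm (F y) \<le> \<bar>K\<bar> * norm y ^ 2"
    unfolding eventually_at
  proof (intro exI[of _ 1] conjI ballI impI allI)
    fix y :: "real^'n" assume y: "y \<noteq> 0 \<and> dist y 0 < 1"
    have "norm (F y) \<le> K * norm y ^ 2" using b[of y] y by (simp add: dist_norm)
    also have "\<dots> \<le> \<bar>K\<bar> * norm y ^ 2" by (rule mult_right_mono) auto
    finally show "norm (F y) \<le> \<bar>K\<bar> * norm y ^ 2" .
  qed simp
  have "((\<lambda>y::real^'n. \<bar>K\<bar> * norm y ^ 2) \<longlongrightarrow> \<bar>K\<bar> * norm (0::real^'n) ^ 2) (at 0)"
    by (intro tendsto_intros)
  then have "(F \<longlongrightarrow> 0) (at 0)" using Lim_null_comparison[OF ev] by simp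
  then show ?thesis unfolding isCont_def using z by simp
qed

context
  fixes m :: "real^'n::finite \<Rightarrow> complex"
  assumes sm: "smooth_fun_on (UNIV - {0}) m"
    and gr: "\<forall>ds. \<exists>L1 L2 C. L1 \<ge> 0 \<and> L2 \<ge> 0 \<and>
        (\<forall>\<xi>. \<xi> \<noteq> 0 \<longrightarrow> norm (dpart ds m \<xi>) \<le> C * max (norm \<xi> powr (- L1)) (norm \<xi> powr L2))"
begin

lemma quad_h:
  assumes g: "g \<in> schwartz00"
  shows "\<exists>K. \<forall>y. y \<noteq> 0 \<and> norm y \<le> 1 \<longrightarrow> norm (dpart ds (mg m g) y) \<le> K * norm y ^ 2"
proof -
  obtain C N where "\<forall>z\<in>{(g,y). g \<in> schwartz00 \<and> y \<noteq> 0 \<and> norm y \<le> 1}.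
     norm (dpart ds (mg m (fst z)) (snd z)) \<le> C * S N (fst z) * norm (snd z) ^ 2"
    using h_bound_0[OF sm gr, of ds] by blast
  note CN = this
  show ?thesis
  proof (intro exI[of _ "C * S N g"] allI impI)
    fix y :: "real^'n" assume y: "y \<noteq> 0 \<and> norm y \<le> 1"
    have "(g,y) \<in> {(g,y). g \<in> schwartz00 \<and> y \<noteq> 0 \<and> norm y \<le> 1}" using g y by simp
    from bspec[OF CN this] show "norm (dpart ds (mg m g) y) \<le> C * S N g * norm y ^ 2"
      by (simp cong: if_cong)
  qed
qed

lemma h_zero:
  assumes g: "g \<in> schwartz00"
  shows "dpart ds (mg m g) 0 = 0"
proof (induction ds)
  case Nil then show ?case by simp
next
  case (Cons i ds)
  obtain K where K: "\<forall>y. y \<noteq> 0 \<and> norm y \<le> 1 \<longrightarrow> norm (dpart ds (mg m g) y) \<le> K * norm y ^ 2"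
    using quad_h[OF g] by blast
  have "((\<lambda>t. dpart ds (mg m g) (0 + t *\<^sub>R ax i)) has_vector_derivative 0) (at 0)"
  proof (rule quad_deriv)
    show "dpart ds (mg m g) (0 + 0 *\<^sub>R ax i) = 0" using Cons by simp
    fix t :: real assume "t \<noteq> 0" "\<bar>t\<bar> \<le> 1"
    then show "norm (dpart ds (mg m g) (0 + t *\<^sub>R ax i)) \<le> K * t ^ 2"
      using K[rule_format, of "t *\<^sub>R ax i"] by (simp add: axis_eq_0_iff)
  qed
  then have "partial_dir i (dpart ds (mg m g)) 0 = 0" by (rule pd_eqI)
  then show ?case by simp
qed

lemma h_smooth:
  assumes g: "g \<in> schwartz00"
  shows "smooth_fun_on UNIV (mg m g)"
proof -
  have gs: "g \<in> schwartz" using g by (auto simp: schwartz00_def)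
  have gsm: "smooth_fun_on (UNIV - {0}) g" by (rule smooth_sub[OF schwartz_smooth[OF gs]])
  have U: "open (UNIV - {0::real^'n})" by auto
  have eq: "\<And>ds y. y \<in> UNIV - {0} \<Longrightarrow> dpart ds (mg m g) y = LS m g (pairs ds) y"
    using h_eq[OF sm gr schwartz_smooth[OF gs]] by auto
  show ?thesis
  proof (rule smoothI)
    fix ds
    have c1: "continuous_on (UNIV - {0}) (dpart ds (mg m g))"
      using continuous_on_eq[OF LS_cont[OF sm gsm, of "pairs ds"]] eq by metis
    have "isCont (dpart ds (mg m g)) x" for x
    proof (cases "x = 0")
      case True
      obtain K where K: "\<forall>y. y \<noteq> 0 \<and> norm y \<le> 1 \<longrightarrow> norm (dpart ds (mg m g) y) \<le> K * norm y ^ 2"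
        using quad_h[OF g] by blast
      show ?thesis unfolding True by (rule quad_cont[where F = "dpart ds (mg m g)", OF h_zero[OF g]]) (use K in auto)
    next
      case False
      then show ?thesis using c1 continuous_on_eq_continuous_at[OF U] by auto
    qed
    then show "continuous_on UNIV (dpart ds (mg m g))" by (simp add: continuous_at_imp_continuous_on)
  next
    fix ds i and x :: "real^'n"
    show "\<exists>D. ((\<lambda>t. dpart ds (mg m g) (x + t *\<^sub>R ax i)) has_vector_derivative D) (at 0)"
    proof (cases "x = 0")
      case True
      obtain K where K: "\<forall>y. y \<noteq> 0 \<and> norm y \<le> 1 \<longrightarrow> norm (dpart ds (mg m g) y) \<le> K * norm y ^ 2"
        using quad_h[OF g] by blast
      have "((\<lambda>t. dpart ds (mg m g) (x + t *\<^sub>R ax i)) has_vector_derivative 0) (at 0)"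
      proof (rule quad_deriv)
        show "dpart ds (mg m g) (x + 0 *\<^sub>R ax i) = 0" using True h_zero[OF g] by simp
        fix t :: real assume "t \<noteq> 0" "\<bar>t\<bar> \<le> 1"
        then show "norm (dpart ds (mg m g) (x + t *\<^sub>R ax i)) \<le> K * t ^ 2"
          using K[rule_format, of "t *\<^sub>R ax i"] True by (simp add: axis_eq_0_iff)
      qed
      then show ?thesis by blast
    next
      case False
      then have x: "x \<in> UNIV - {0}" by simp
      show ?thesis using transfer_line[OF U x eq LS_line[OF sm gsm x]] by blast
    qed
  qed
qed

lemma part1:
  assumes g: "g \<in> schwartz00"
  shows "mg m g \<in> schwartz00"
proof -
  have "mg m g \<in> schwartz"
  proof (rule schwartzI[OF h_smooth[OF g]])
    fix ds k
    obtain C N where CN: "\<forall>z\<in>{(g,y). g \<in> schwartz00 \<and> y \<noteq> 0}.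
     (1 + norm (snd z)) ^ k * norm (dpart ds (mg m (fst z)) (snd z)) \<le> C * S N (fst z)"
      using h_bound_w[OF sm gr, of k ds] by blast
    show "\<exists>B. \<forall>x. (1 + norm x) ^ k * norm (dpart ds (mg m g) x) \<le> B"
    proof (intro exI allI)
      fix x :: "real^'n"
      show "(1 + norm x) ^ k * norm (dpart ds (mg m g) x) \<le> max (C * S N g) 0"
      proof (cases "x = 0")
        case True then show ?thesis using h_zero[OF g] by simp
      next
        case False
        have "(g,x) \<in> {(g,y). g \<in> schwartz00 \<and> y \<noteq> 0}" using g False by simp
        from bspec[OF CN this] show ?thesis by (simp cong: if_cong)
      qed
    qed
  qed
  then show ?thesis using h_zero[OF g] unfolding schwartz00_def by blast
qed

end


context
  fixes m :: "real^'n::finite \<Rightarrow> complex"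
  assumes sm: "smooth_fun_on (UNIV - {0}) m"
    and gr: "\<forall>ds. \<exists>L1 L2 C. L1 \<ge> 0 \<and> L2 \<ge> 0 \<and>
        (\<forall>\<xi>. \<xi> \<noteq> 0 \<longrightarrow> norm (dpart ds m \<xi>) \<le> C * max (norm \<xi> powr (- L1)) (norm \<xi> powr L2))"
begin

lemma semi_h:
  "\<exists>C N. \<forall>g\<in>schwartz00. schwartz_seminorm k ds (mg m g) \<le> C * S N g"
proof -
  obtain C N where CN: "\<forall>z\<in>{(g,y). g \<in> schwartz00 \<and> y \<noteq> 0}.
     (1 + norm (snd z)) ^ k * norm (dpart ds (mg m (fst z)) (snd z)) \<le> C * S N (fst z)"
    using h_bound_w[OF sm gr, of k ds] by blast
  show ?thesis
  proof (intro exI ballI)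
    fix g :: "real^'n \<Rightarrow> complex" assume g: "g \<in> schwartz00"
    have gs: "g \<in> schwartz" using g by (auto simp: schwartz00_def)
    show "schwartz_seminorm k ds (mg m g) \<le> max C 0 * S N g"
    proof (rule semi_least)
      fix x :: "real^'n"
      have "(1 + norm x) ^ k * norm (dpart ds (mg m g) x) \<le> max (C * S N g) 0"
      proof (cases "x = 0")
        case True then show ?thesis using h_zero[OF sm gr g] by simp
      next
        case False
        have "(g,x) \<in> {(g,y). g \<in> schwartz00 \<and> y \<noteq> 0}" using g False by simp
        from bspec[OF CN this] show ?thesis by (simp cong: if_cong)
      qed
      also have "\<dots> \<le> max C 0 * S N g"
        using S_nonneg[OF gs, of N] by (simp add: mult_right_mono max_def)
      finally show "(1 + norm x) ^ k * norm (dpart ds (mg m g) x) \<le> max C 0 * S N g" .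
    qed
  qed
qed

lemma part2:
  assumes T: "tempered_distribution T"
  shows "\<exists>C N. \<forall>g\<in>schwartz00. norm (T (mg m g)) \<le> C * S N g"
proof -
  obtain CT NT where CT: "\<forall>f\<in>schwartz. norm (T f) \<le> CT * S NT f"
    using T unfolding tempered_distribution_def by blast
  have s00s: "schwartz00 \<subseteq> schwartz" by (auto simp: schwartz00_def)
  have "\<exists>C N. \<forall>g\<in>schwartz00. (\<Sum>k\<le>NT. \<Sum>ds\<in>{ds :: 'n list. length ds \<le> NT}. schwartz_seminorm k ds (mg m g)) \<le> C * S N g"
  proof (rule sum_bound[OF _ s00s])
    show "\<forall>k\<in>{..NT}. \<exists>C N. \<forall>g\<in>schwartz00. (\<Sum>ds\<in>{ds :: 'n list. length ds \<le> NT}. schwartz_seminorm k ds (mg m g)) \<le> C * S N g"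
    proof
      fix k
      show "\<exists>C N. \<forall>g\<in>schwartz00. (\<Sum>ds\<in>{ds :: 'n list. length ds \<le> NT}. schwartz_seminorm k ds (mg m g)) \<le> C * S N g"
        by (rule sum_bound[OF finite_lists_le s00s]) (use semi_h in blast)
    qed
  qed simp
  then obtain C N where CN: "\<forall>g\<in>schwartz00. S NT (mg m g) \<le> C * S N g"
    unfolding schwartz_seminorm_sum_def by blast
  show ?thesis
  proof (intro exI ballI)
    fix g :: "real^'n \<Rightarrow> complex" assume g: "g \<in> schwartz00"
    have hs: "mg m g \<in> schwartz" using part1[OF sm gr g] by (auto simp: schwartz00_def)
    have "norm (T (mg m g)) \<le> CT * S NT (mg m g)" using CT hs by blast
    also have "\<dots> \<le> max CT 0 * S NT (mg m g)"
      using S_nonneg[OF hs, of NT] by (simp add: mult_right_mono)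
    also have "\<dots> \<le> max CT 0 * (C * S N g)"
      using CN g by (intro mult_left_mono) auto
    finally show "norm (T (mg m g)) \<le> (max CT 0 * C) * S N g" by (simp add: mult.assoc)
  qed
qed

end


lemma Inf_add_ge:
  fixes A B :: "real set"
  assumes "A \<noteq> {}" "B \<noteq> {}" "bdd_below A" "bdd_below B" "\<And>a b. a \<in> A \<Longrightarrow> b \<in> B \<Longrightarrow> v \<le> a + b"
  shows "v \<le> Inf A + Inf B"
proof -
  have "v - Inf B \<le> a" if a: "a \<in> A" for a
  proof -
    have "v - a \<le> Inf B" by (rule cInf_greatest[OF assms(2)]) (use assms(5)[OF a] in force)
    then show ?thesis by simp
  qed
  then have "v - Inf B \<le> Inf A" by (intro cInf_greatest[OF assms(1)]) auto
  then show ?thesis by simp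
qed

lemma Inf_scale:
  fixes A :: "real set"
  assumes "A \<noteq> {}" "bdd_below A" "c > 0"
  shows "Inf ((\<lambda>a. c * a) ` A) = c * Inf A"
proof -
  obtain M where M: "\<And>x. x \<in> A \<Longrightarrow> M \<le> x" using assms(2) unfolding bdd_below_def by blast
  have bdd: "bdd_below ((\<lambda>a. c * a) ` A)"
    unfolding bdd_below_def using M assms(3) by (auto intro!: exI[of _ "c * M"] mult_left_mono)
  show ?thesis
proof (rule antisym)
  show "Inf ((\<lambda>a. c * a) ` A) \<le> c * Inf A"
  proof -
    have "Inf ((\<lambda>a. c * a) ` A) / c \<le> a" if "a \<in> A" for a
    proof -
      have "Inf ((\<lambda>a. c * a) ` A) \<le> c * a"
        by (rule cInf_lower) (use that bdd in auto)
      then show ?thesis using assms by (simp add: divide_le_eq mult.commute)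
    qed
    then have "Inf ((\<lambda>a. c * a) ` A) / c \<le> Inf A" by (intro cInf_greatest[OF assms(1)]) auto
    then show ?thesis using assms by (simp add: divide_le_eq mult.commute)
  qed
  show "c * Inf A \<le> Inf ((\<lambda>a. c * a) ` A)"
    by (rule cInf_greatest) (use assms in \<open>auto intro!: mult_left_mono cInf_lower\<close>)
qed
qed

definition sublin :: "'a::real_vector set \<Rightarrow> ('a \<Rightarrow> real) \<Rightarrow> bool" where
  "sublin V q \<longleftrightarrow> (\<forall>x\<in>V. \<forall>y\<in>V. q (x + y) \<le> q x + q y) \<and> (\<forall>x\<in>V. \<forall>c>0. q (c *\<^sub>R x) = c * q x)"

definition epi :: "'a set \<Rightarrow> ('a \<Rightarrow> real) \<Rightarrow> ('a \<times> real) set" where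
  "epi V q = {(x,c). x \<in> V \<and> q x \<le> c}"

lemma epi_sub: "epi V q1 \<subseteq> epi V q2 \<longleftrightarrow> (\<forall>x\<in>V. q2 x \<le> q1 x)"
  unfolding epi_def by force

locale vsp =
  fixes V :: "'a::real_vector set"
  assumes zero: "0 \<in> V" and add: "\<And>x y. x \<in> V \<Longrightarrow> y \<in> V \<Longrightarrow> x + y \<in> V"
    and scale: "\<And>x c. x \<in> V \<Longrightarrow> c *\<^sub>R x \<in> V"
begin

lemma neg: "x \<in> V \<Longrightarrow> - x \<in> V" using scale[of x "-1"] by simp
lemma diff: assumes "x \<in> V" "y \<in> V" shows "x - y \<in> V"
proof -
  have "x + - y \<in> V" using add[OF assms(1) neg[OF assms(2)]] .
  then show ?thesis by simp
qed

lemma sublin_0: assumes "sublin V q" shows "q 0 = 0"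
proof -
  have "\<forall>c>0. q (c *\<^sub>R 0) = c * q 0" using assms zero unfolding sublin_def by blast
  then have "q ((2::real) *\<^sub>R 0) = 2 * q 0" by (meson zero_less_numeral)
  then show ?thesis by simp
qed

lemma sublin_hom0: "sublin V q \<Longrightarrow> x \<in> V \<Longrightarrow> c \<ge> 0 \<Longrightarrow> q (c *\<^sub>R x) = c * q x"
  using sublin_0 unfolding sublin_def by (cases "c = 0") auto

lemma sublin_lower: assumes "sublin V q" "x \<in> V" shows "- q (- x) \<le> q x"
proof -
  have "q (x + - x) \<le> q x + q (- x)" using assms neg unfolding sublin_def by blast
  then show ?thesis using sublin_0[OF assms(1)] by simp
qed


lemma sublin_linear:
  assumes sq: "sublin V q" and neg_eq: "\<And>x. x \<in> V \<Longrightarrow> q (- x) = - q x"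
  shows "(\<forall>x\<in>V. \<forall>y\<in>V. q (x + y) = q x + q y) \<and> (\<forall>x\<in>V. \<forall>c. q (c *\<^sub>R x) = c * q x)"
proof (intro conjI ballI allI)
  fix x y assume x: "x \<in> V" and y: "y \<in> V"
  have "q (x + y) \<le> q x + q y" using sq x y unfolding sublin_def by blast
  moreover have "q (- x + - y) \<le> q (- x) + q (- y)" using sq neg x y unfolding sublin_def by blast
  then have "- q (x + y) \<le> - q x - q y" using neg_eq[OF add[OF x y]] neg_eq[OF x] neg_eq[OF y] by simp
  ultimately show "q (x + y) = q x + q y" by linarith
next
  fix x c assume x: "x \<in> V"
  show "q (c *\<^sub>R x) = c * q x"
  proof (cases "c \<ge> 0")
    case True then show ?thesis using sublin_hom0[OF sq x] by simp
  next
    case False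
    have "q (c *\<^sub>R x) = q (- ((- c) *\<^sub>R x))" by simp
    also have "\<dots> = - q ((- c) *\<^sub>R x)" using neg_eq scale[OF x] by blast
    also have "\<dots> = c * q x" using sublin_hom0[OF sq x, of "- c"] False by simp
    finally show ?thesis .
  qed
qed

lemma image_scale_nonneg: "(c::real) > 0 \<Longrightarrow> (\<lambda>s. c * s) ` {0..} = {0..}"
proof -
  assume c: "c > 0"
  have "t \<in> (\<lambda>s. c * s) ` {0..}" if "t \<ge> 0" for t
    by (rule image_eqI[of _ _ "t / c"]) (use c that in auto)
  then show ?thesis using c by auto
qed

lemma sublin_dominates_linear:
  assumes p0: "sublin V p0"
  shows "\<exists>\<Lambda>. (\<forall>x\<in>V. \<forall>y\<in>V. \<Lambda> (x + y) = \<Lambda> x + \<Lambda> y) \<and> (\<forall>x\<in>V. \<forall>c. \<Lambda> (c *\<^sub>R x) = c * \<Lambda> x) \<and> (\<forall>x\<in>V. \<Lambda> x \<le> p0 x)"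
proof -
  define P where "P = {q. sublin V q \<and> (\<forall>x\<in>V. q x \<le> p0 x)}"
  define A where "A = epi V ` P"
  have p0P: "p0 \<in> P" unfolding P_def using p0 by auto
  have low: "\<And>q x. q \<in> P \<Longrightarrow> x \<in> V \<Longrightarrow> - p0 (- x) \<le> q x"
  proof -
    fix q x assume q: "q \<in> P" and x: "x \<in> V"
    have "q (- x) \<le> p0 (- x)" using q neg[OF x] unfolding P_def by auto
    moreover have "- q (- x) \<le> q x" using sublin_lower[OF _ x] q unfolding P_def by auto
    ultimately show "- p0 (- x) \<le> q x" by linarith
  qed
  have "\<exists>M\<in>A. \<forall>X\<in>A. M \<subseteq> X \<longrightarrow> X = M"
  proof (rule Zorn_Lemma2, intro ballI)
    fix C assume C: "C \<in> chains A"
    show "\<exists>U\<in>A. \<forall>X\<in>C. X \<subseteq> U"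
    proof (cases "C = {}")
      case True
      then show ?thesis using p0P unfolding A_def by auto
    next
      case False
      define Q where "Q = {q\<in>P. epi V q \<in> C}"
      have CA: "C \<subseteq> A" using C unfolding chains_def by auto
      have CQ: "\<forall>X\<in>C. \<exists>q\<in>Q. X = epi V q" using CA unfolding A_def Q_def by auto
      have Qne: "Q \<noteq> {}" using CQ False by blast
      have chainQ: "(\<forall>x\<in>V. q1 x \<le> q2 x) \<or> (\<forall>x\<in>V. q2 x \<le> q1 x)" if "q1 \<in> Q" "q2 \<in> Q" for q1 q2
      proof -
        have "epi V q1 \<subseteq> epi V q2 \<or> epi V q2 \<subseteq> epi V q1"
          using C that unfolding chains_def chain_subset_def Q_def by auto
        then show ?thesis unfolding epi_sub by blast
      qed
      have QP: "\<And>q. q \<in> Q \<Longrightarrow> q \<in> P" unfolding Q_def by auto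
      have Qsl: "\<And>q. q \<in> Q \<Longrightarrow> sublin V q" using QP unfolding P_def by auto
      define r where "r x = Inf ((\<lambda>q. q x) ` Q)" for x
      have bdd: "bdd_below ((\<lambda>q. q x) ` Q)" if "x \<in> V" for x
        unfolding bdd_below_def using low[OF QP that] by blast
      have rle: "r x \<le> q x" if "q \<in> Q" "x \<in> V" for q x
        unfolding r_def by (rule cInf_lower) (use that bdd in auto)
      have rsub: "r (x + y) \<le> r x + r y" if x: "x \<in> V" and y: "y \<in> V" for x y
        unfolding r_def
      proof (rule Inf_add_ge)
        show "(\<lambda>q. q x) ` Q \<noteq> {}" "(\<lambda>q. q y) ` Q \<noteq> {}" using Qne by auto
        show "bdd_below ((\<lambda>q. q x) ` Q)" "bdd_below ((\<lambda>q. q y) ` Q)" using bdd x y by auto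
        fix a b assume "a \<in> (\<lambda>q. q x) ` Q" "b \<in> (\<lambda>q. q y) ` Q"
        then obtain q1 q2 where q: "q1 \<in> Q" "q2 \<in> Q" "a = q1 x" "b = q2 y" by auto
        show "Inf ((\<lambda>q. q (x + y)) ` Q) \<le> a + b"
        proof (cases "\<forall>x\<in>V. q1 x \<le> q2 x")
          case True
          have "Inf ((\<lambda>q. q (x + y)) ` Q) \<le> q1 (x + y)" using rle[OF q(1) add[OF x y]] unfolding r_def .
          also have "\<dots> \<le> q1 x + q1 y" using Qsl[OF q(1)] x y unfolding sublin_def by blast
          also have "\<dots> \<le> a + b" using True y q by auto
          finally show ?thesis .
        next
          case False
          then have T: "\<forall>x\<in>V. q2 x \<le> q1 x" using chainQ[OF q(1,2)] by blast
          have "Inf ((\<lambda>q. q (x + y)) ` Q) \<le> q2 (x + y)" using rle[OF q(2) add[OF x y]] unfolding r_def .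
          also have "\<dots> \<le> q2 x + q2 y" using Qsl[OF q(2)] x y unfolding sublin_def by blast
          also have "\<dots> \<le> a + b" using T x q by auto
          finally show ?thesis .
        qed
      qed
      have rhom: "r (c *\<^sub>R x) = c * r x" if x: "x \<in> V" and c: "c > 0" for x c
      proof -
        have "(\<lambda>q. q (c *\<^sub>R x)) ` Q = (\<lambda>a. c * a) ` ((\<lambda>q. q x) ` Q)"
          unfolding image_image using Qsl x c unfolding sublin_def by (auto intro!: image_cong)
        then show ?thesis unfolding r_def using Inf_scale[OF _ bdd[OF x] c] Qne by simp
      qed
      have rP: "r \<in> P"
        unfolding P_def sublin_def
      proof (intro CollectI conjI ballI allI impI)
        fix x y assume "x \<in> V" "y \<in> V" then show "r (x + y) \<le> r x + r y" by (rule rsub)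
      next
        fix x and c :: real assume "x \<in> V" "c > 0" then show "r (c *\<^sub>R x) = c * r x" by (rule rhom)
      next
        fix x assume x: "x \<in> V"
        obtain q where q: "q \<in> Q" using Qne by blast
        have "r x \<le> q x" by (rule rle[OF q x])
        also have "\<dots> \<le> p0 x" using QP[OF q] x unfolding P_def by auto
        finally show "r x \<le> p0 x" .
      qed
      show ?thesis
      proof (rule bexI[of _ "epi V r"])
        show "epi V r \<in> A" using rP unfolding A_def by auto
        show "\<forall>X\<in>C. X \<subseteq> epi V r"
        proof
          fix X assume "X \<in> C"
          then obtain q where q: "q \<in> Q" "X = epi V q" using CQ by blast
          show "X \<subseteq> epi V r" unfolding q(2) epi_sub using rle[OF q(1)] by blast
        qed
      qed
    qed
  qed
  then obtain q0 where q0P: "q0 \<in> P" and max: "\<And>q. q \<in> P \<Longrightarrow> epi V q0 \<subseteq> epi V q \<Longrightarrow> epi V q = epi V q0"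
    unfolding A_def by blast
  have minimal: "\<And>q x. q \<in> P \<Longrightarrow> (\<forall>x\<in>V. q x \<le> q0 x) \<Longrightarrow> x \<in> V \<Longrightarrow> q0 x \<le> q x"
  proof -
    fix q x assume q: "q \<in> P" "\<forall>x\<in>V. q x \<le> q0 x" and x: "x \<in> V"
    have "epi V q0 \<subseteq> epi V q" unfolding epi_sub using q by blast
    then have "epi V q \<subseteq> epi V q0" using max[OF q(1)] by simp
    then show "q0 x \<le> q x" unfolding epi_sub using x by blast
  qed
  have sq0: "sublin V q0" and q0le: "\<forall>x\<in>V. q0 x \<le> p0 x" using q0P unfolding P_def by auto
  have negq0: "q0 (- x) = - q0 x" if x: "x \<in> V" for x
  proof -
    define r where "r y = Inf ((\<lambda>t. q0 (y + t *\<^sub>R x) - t * q0 x) ` {0..})" for y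
    have lowr: "- q0 (- y) \<le> q0 (y + t *\<^sub>R x) - t * q0 x" if y: "y \<in> V" and t: "t \<ge> 0" for y t
    proof -
      have "q0 ((y + t *\<^sub>R x) + - y) \<le> q0 (y + t *\<^sub>R x) + q0 (- y)"
        using sq0 add[OF y scale[OF x]] neg[OF y] unfolding sublin_def by blast
      moreover have "q0 (t *\<^sub>R x) = t * q0 x" using sublin_hom0[OF sq0 x t] .
      ultimately show ?thesis by simp
    qed
    have bdd: "bdd_below ((\<lambda>t. q0 (y + t *\<^sub>R x) - t * q0 x) ` {0..})" if "y \<in> V" for y
      unfolding bdd_below_def using lowr[OF that] by auto
    have rle: "r y \<le> q0 (y + t *\<^sub>R x) - t * q0 x" if "y \<in> V" "t \<ge> 0" for y t
      unfolding r_def by (rule cInf_lower) (use that bdd in auto)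
    have rP: "r \<in> P"
      unfolding P_def sublin_def
    proof (intro CollectI conjI ballI allI impI)
      fix y z assume y: "y \<in> V" and z: "z \<in> V"
      show "r (y + z) \<le> r y + r z"
        unfolding r_def
      proof (rule Inf_add_ge)
        show "(\<lambda>t. q0 (y + t *\<^sub>R x) - t * q0 x) ` {0..} \<noteq> {}" "(\<lambda>t. q0 (z + t *\<^sub>R x) - t * q0 x) ` {0..} \<noteq> {}" by auto
        show "bdd_below ((\<lambda>t. q0 (y + t *\<^sub>R x) - t * q0 x) ` {0..})" "bdd_below ((\<lambda>t. q0 (z + t *\<^sub>R x) - t * q0 x) ` {0..})"
          using bdd y z by auto
        fix a b assume "a \<in> (\<lambda>t. q0 (y + t *\<^sub>R x) - t * q0 x) ` {0..}" "b \<in> (\<lambda>t. q0 (z + t *\<^sub>R x) - t * q0 x) ` {0..}"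
        then obtain s t where st: "s \<ge> 0" "t \<ge> 0" "a = q0 (y + s *\<^sub>R x) - s * q0 x" "b = q0 (z + t *\<^sub>R x) - t * q0 x" by auto
        have "Inf ((\<lambda>t. q0 ((y + z) + t *\<^sub>R x) - t * q0 x) ` {0..}) \<le> q0 ((y + z) + (s + t) *\<^sub>R x) - (s + t) * q0 x"
          using rle[OF add[OF y z], of "s + t"] st unfolding r_def by simp
        also have "(y + z) + (s + t) *\<^sub>R x = (y + s *\<^sub>R x) + (z + t *\<^sub>R x)" by (simp add: algebra_simps)
        also have "q0 ((y + s *\<^sub>R x) + (z + t *\<^sub>R x)) \<le> q0 (y + s *\<^sub>R x) + q0 (z + t *\<^sub>R x)"
          using sq0 add[OF y scale[OF x]] add[OF z scale[OF x]] unfolding sublin_def by blast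
        finally show "Inf ((\<lambda>t. q0 ((y + z) + t *\<^sub>R x) - t * q0 x) ` {0..}) \<le> a + b"
          using st by (simp add: algebra_simps)
      qed
    next
      fix y and c :: real assume y: "y \<in> V" and c: "c > 0"
      have "(\<lambda>t. q0 (c *\<^sub>R y + t *\<^sub>R x) - t * q0 x) ` {0..} = (\<lambda>t. q0 (c *\<^sub>R y + t *\<^sub>R x) - t * q0 x) ` ((\<lambda>s. c * s) ` {0..})"
        using image_scale_nonneg[OF c] by simp
      also have "\<dots> = (\<lambda>a. c * a) ` ((\<lambda>t. q0 (y + t *\<^sub>R x) - t * q0 x) ` {0..})"
        unfolding image_image
      proof (rule image_cong[OF refl])
        fix s :: real assume s: "s \<in> {0..}"
        have "c *\<^sub>R y + (c * s) *\<^sub>R x = c *\<^sub>R (y + s *\<^sub>R x)" by (simp add: algebra_simps)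
        moreover have "q0 (c *\<^sub>R (y + s *\<^sub>R x)) = c * q0 (y + s *\<^sub>R x)"
          using sq0 c add[OF y scale[OF x]] unfolding sublin_def by blast
        ultimately show "q0 (c *\<^sub>R y + (c * s) *\<^sub>R x) - c * s * q0 x = c * (q0 (y + s *\<^sub>R x) - s * q0 x)"
          by (simp add: algebra_simps)
      qed
      finally show "r (c *\<^sub>R y) = c * r y"
        unfolding r_def using Inf_scale[OF _ bdd[OF y] c] by simp
    next
      fix y assume y: "y \<in> V"
      have "r y \<le> q0 (y + 0 *\<^sub>R x) - 0 * q0 x" by (rule rle[OF y]) simp
      also have "\<dots> \<le> p0 y" using q0le y by simp
      finally show "r y \<le> p0 y" .
    qed
    have "\<forall>y\<in>V. r y \<le> q0 y" using rle[of _ 0] by simp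
    then have "q0 (- x) \<le> r (- x)" using minimal[OF rP] neg[OF x] by blast
    also have "\<dots> \<le> q0 (- x + 1 *\<^sub>R x) - 1 * q0 x" by (rule rle[OF neg[OF x]]) simp
    also have "\<dots> = - q0 x" using sublin_0[OF sq0] by simp
    finally show ?thesis using sublin_lower[OF sq0 x] by linarith
  qed
  show ?thesis using sublin_linear[OF sq0 negq0] q0le by blast
qed


lemma image_scale_sub: "c \<noteq> 0 \<Longrightarrow> (\<lambda>w. c *\<^sub>R w) ` V = V"
proof -
  assume c: "c \<noteq> 0"
  have "w \<in> (\<lambda>w. c *\<^sub>R w) ` V" if "w \<in> V" for w
    by (rule image_eqI[of _ _ "(1/c) *\<^sub>R w"]) (use c that scale in auto)
  then show ?thesis using scale by auto
qed

lemma real_HB: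
  assumes W: "vsp W" "W \<subseteq> V" and p: "sublin V p"
    and ladd: "\<forall>x\<in>W. \<forall>y\<in>W. l (x + y) = l x + l y" and lhom: "\<forall>x\<in>W. \<forall>c. l (c *\<^sub>R x) = c * l x"
    and ldom: "\<forall>x\<in>W. l x \<le> p x"
  shows "\<exists>\<Lambda>. (\<forall>x\<in>V. \<forall>y\<in>V. \<Lambda> (x + y) = \<Lambda> x + \<Lambda> y) \<and> (\<forall>x\<in>V. \<forall>c. \<Lambda> (c *\<^sub>R x) = c * \<Lambda> x)
     \<and> (\<forall>w\<in>W. \<Lambda> w = l w) \<and> (\<forall>x\<in>V. \<Lambda> x \<le> p x)"
proof -
  have WV: "\<And>w. w \<in> W \<Longrightarrow> w \<in> V" using W(2) by auto
  have Wneg: "\<And>w. w \<in> W \<Longrightarrow> - w \<in> W" using vsp.neg[OF W(1)] .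
  have Wadd: "\<And>x y. x \<in> W \<Longrightarrow> y \<in> W \<Longrightarrow> x + y \<in> W" using vsp.add[OF W(1)] .
  have W0: "0 \<in> W" using vsp.zero[OF W(1)] .
  have l0: "l 0 = 0" using lhom W0 by (metis scaleR_zero_left mult_zero_left)
  have lneg: "l (- w) = - l w" if "w \<in> W" for w using lhom that by (metis scaleR_minus1_left mult_minus1)
  have psub: "\<And>x y. x \<in> V \<Longrightarrow> y \<in> V \<Longrightarrow> p (x + y) \<le> p x + p y" using p unfolding sublin_def by blast
  define p' where "p' x = Inf ((\<lambda>w. p (x - w) + l w) ` W)" for x
  have lowp: "- p (- x) \<le> p (x - w) + l w" if x: "x \<in> V" and w: "w \<in> W" for x w
  proof -
    have "l (- w) \<le> p (- w)" using ldom Wneg[OF w] by blast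
    then have a: "- p (- w) \<le> l w" using lneg[OF w] by simp
    have "p ((x - w) + - x) \<le> p (x - w) + p (- x)" using psub[OF diff[OF x WV[OF w]] neg[OF x]] .
    then have "p (- w) \<le> p (x - w) + p (- x)" by simp
    then show ?thesis using a by linarith
  qed
  have bdd: "bdd_below ((\<lambda>w. p (x - w) + l w) ` W)" if "x \<in> V" for x
    unfolding bdd_below_def using lowp[OF that] by auto
  have p'le: "p' x \<le> p (x - w) + l w" if "x \<in> V" "w \<in> W" for x w
    unfolding p'_def by (rule cInf_lower) (use that bdd in auto)
  have sp': "sublin V p'"
    unfolding sublin_def
  proof (intro conjI ballI allI impI)
    fix x y assume x: "x \<in> V" and y: "y \<in> V"
    show "p' (x + y) \<le> p' x + p' y"
      unfolding p'_def
    proof (rule Inf_add_ge)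
      show "(\<lambda>w. p (x - w) + l w) ` W \<noteq> {}" "(\<lambda>w. p (y - w) + l w) ` W \<noteq> {}" using W0 by auto
      show "bdd_below ((\<lambda>w. p (x - w) + l w) ` W)" "bdd_below ((\<lambda>w. p (y - w) + l w) ` W)" using bdd x y by auto
      fix a b assume "a \<in> (\<lambda>w. p (x - w) + l w) ` W" "b \<in> (\<lambda>w. p (y - w) + l w) ` W"
      then obtain w1 w2 where w: "w1 \<in> W" "w2 \<in> W" "a = p (x - w1) + l w1" "b = p (y - w2) + l w2" by auto
      have "Inf ((\<lambda>w. p (x + y - w) + l w) ` W) \<le> p (x + y - (w1 + w2)) + l (w1 + w2)"
        using p'le[OF add[OF x y] Wadd[OF w(1,2)]] unfolding p'_def .
      also have "x + y - (w1 + w2) = (x - w1) + (y - w2)" by (simp add: algebra_simps)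
      also have "p ((x - w1) + (y - w2)) \<le> p (x - w1) + p (y - w2)"
        using psub[OF diff[OF x WV[OF w(1)]] diff[OF y WV[OF w(2)]]] .
      finally show "Inf ((\<lambda>w. p (x + y - w) + l w) ` W) \<le> a + b"
        using w ladd by (simp add: algebra_simps)
    qed
  next
    fix x and c :: real assume x: "x \<in> V" and c: "c > 0"
    have "(\<lambda>w. p (c *\<^sub>R x - w) + l w) ` W = (\<lambda>w. p (c *\<^sub>R x - w) + l w) ` ((\<lambda>w. c *\<^sub>R w) ` W)"
      using vsp.image_scale_sub[OF W(1), of c] c by simp
    also have "\<dots> = (\<lambda>a. c * a) ` ((\<lambda>w. p (x - w) + l w) ` W)"
      unfolding image_image
    proof (rule image_cong[OF refl])
      fix w assume w: "w \<in> W"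
      have "c *\<^sub>R x - c *\<^sub>R w = c *\<^sub>R (x - w)" by (simp add: algebra_simps)
      moreover have "p (c *\<^sub>R (x - w)) = c * p (x - w)"
        using p c diff[OF x WV[OF w]] unfolding sublin_def by blast
      ultimately show "p (c *\<^sub>R x - c *\<^sub>R w) + l (c *\<^sub>R w) = c * (p (x - w) + l w)"
        using lhom w by (simp add: algebra_simps)
    qed
    finally show "p' (c *\<^sub>R x) = c * p' x"
      unfolding p'_def using Inf_scale[OF _ bdd[OF x] c] W0 by auto
  qed
  obtain \<Lambda> where L: "\<forall>x\<in>V. \<forall>y\<in>V. \<Lambda> (x + y) = \<Lambda> x + \<Lambda> y" "\<forall>x\<in>V. \<forall>c. \<Lambda> (c *\<^sub>R x) = c * \<Lambda> x"
    "\<forall>x\<in>V. \<Lambda> x \<le> p' x"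
    using sublin_dominates_linear[OF sp'] by blast
  have p0: "p 0 = 0" by (rule sublin_0[OF p])
  have Lle: "\<Lambda> w \<le> l w" if w: "w \<in> W" for w
  proof -
    have "\<Lambda> w \<le> p' w" using L(3) WV[OF w] by blast
    also have "\<dots> \<le> p (w - w) + l w" by (rule p'le[OF WV[OF w] w])
    finally show ?thesis using p0 by simp
  qed
  show ?thesis
  proof (intro exI conjI ballI)
    show "\<And>x y. x \<in> V \<Longrightarrow> y \<in> V \<Longrightarrow> \<Lambda> (x + y) = \<Lambda> x + \<Lambda> y" using L(1) by blast
    show "\<And>x. x \<in> V \<Longrightarrow> \<forall>c. \<Lambda> (c *\<^sub>R x) = c * \<Lambda> x" using L(2) by blast
    fix w assume w: "w \<in> W"
    have "\<Lambda> (- w) \<le> l (- w)" using Lle[OF Wneg[OF w]] .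
    moreover have "\<Lambda> (- w) = - \<Lambda> w" using L(2) WV[OF w] by (metis scaleR_minus1_left mult_minus1)
    ultimately show "\<Lambda> w = l w" using Lle[OF w] lneg[OF w] by linarith
  next
    fix x assume x: "x \<in> V"
    have "\<Lambda> x \<le> p' x" using L(3) x by blast
    also have "\<dots> \<le> p (x - 0) + l 0" by (rule p'le[OF x W0])
    finally show "\<Lambda> x \<le> p x" using l0 by simp
  qed
qed

end


instantiation "fun" :: (type, real_vector) real_vector
begin
definition scaleR_fun :: "real \<Rightarrow> ('a \<Rightarrow> 'b) \<Rightarrow> 'a \<Rightarrow> 'b" where
  "scaleR_fun r f = (\<lambda>x. r *\<^sub>R f x)"
instance by standard (simp_all add: scaleR_fun_def fun_eq_iff scaleR_add_right scaleR_add_left)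
end

lemma dpart_zero: "dpart ds (\<lambda>x::real^'n::finite. 0::complex) = (\<lambda>x. 0)"
proof (induction ds)
  case Nil then show ?case by simp
next
  case (Cons i ds)
  have "partial_dir i (\<lambda>x::real^'n. 0::complex) x = 0" for x
    by (rule pd_eqI) simp
  then have "partial_dir i (\<lambda>x::real^'n. 0::complex) = (\<lambda>x. 0)" by (simp add: fun_eq_iff)
  moreover have "dpart (i#ds) (\<lambda>x::real^'n. 0::complex) = partial_dir i (\<lambda>x. 0)"
    by (simp only: dpart.simps Cons.IH)
  ultimately show ?case by simp
qed

lemma zero_schwartz00: "(\<lambda>x. 0) \<in> schwartz00"
proof -
  have "(\<lambda>x::real^'a. 0::complex) \<in> schwartz"
  proof (rule schwartzI)
    show "smooth_fun_on UNIV (\<lambda>x::real^'a. 0::complex)"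
      unfolding smooth_fun_on_def dpart_zero by (auto intro: differentiableI_vector[OF has_vector_derivative_const])
  qed (auto simp: dpart_zero)
  then show ?thesis unfolding schwartz00_def by (simp add: dpart_zero)
qed

lemma scaleR_fun_conv: "c *\<^sub>R f = (\<lambda>x. complex_of_real c * f x)" for f :: "'a \<Rightarrow> complex"
  by (simp add: scaleR_fun_def scaleR_conv_of_real fun_eq_iff)

lemma plus_fun_conv: "f + g = (\<lambda>x. f x + g x)"
  by (simp add: fun_eq_iff)

lemma vsp_schwartz: "vsp (schwartz :: (real^'n::finite \<Rightarrow> complex) set)"
proof
  show "0 \<in> (schwartz :: (real^'n::finite \<Rightarrow> complex) set)"
    using zero_schwartz00 unfolding schwartz00_def zero_fun_def by blast
  show "x + y \<in> schwartz" if "x \<in> schwartz" "y \<in> schwartz" for x y :: "real^'n \<Rightarrow> complex"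
    using schwartz_add[OF that] unfolding plus_fun_conv .
  show "c *\<^sub>R x \<in> schwartz" if "x \<in> schwartz" for x :: "real^'n \<Rightarrow> complex" and c
    using schwartz_cmult[OF that] unfolding scaleR_fun_conv .
qed

lemma vsp_schwartz00: "vsp (schwartz00 :: (real^'n::finite \<Rightarrow> complex) set)"
proof
  show "0 \<in> (schwartz00 :: (real^'n::finite \<Rightarrow> complex) set)"
    using zero_schwartz00 unfolding zero_fun_def by blast
  show "x + y \<in> schwartz00" if "x \<in> schwartz00" "y \<in> schwartz00" for x y :: "real^'n \<Rightarrow> complex"
    using s00_add[OF that] unfolding plus_fun_conv .
  show "c *\<^sub>R x \<in> schwartz00" if "x \<in> schwartz00" for x :: "real^'n \<Rightarrow> complex" and c
    using s00_cmult[OF that] unfolding scaleR_fun_conv .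
qed

lemma complex_HB:
  fixes L :: "(real^'n::finite \<Rightarrow> complex) \<Rightarrow> complex"
  assumes ladd: "\<forall>f\<in>schwartz00. \<forall>g\<in>schwartz00. L (\<lambda>x. f x + g x) = L f + L g"
    and lhom: "\<forall>c. \<forall>f\<in>schwartz00. L (\<lambda>x. c * f x) = c * L f"
    and lb: "\<forall>g\<in>schwartz00. norm (L g) \<le> C * S N g"
  shows "\<exists>T'. tempered_distribution T' \<and> (\<forall>g\<in>schwartz00. T' g = L g)"
proof -
  define C' where "C' = max C 0"
  define p where "p g = C' * S N g" for g :: "real^'n \<Rightarrow> complex"
  have C'0: "C' \<ge> 0" unfolding C'_def by simp
  have WV: "schwartz00 \<subseteq> (schwartz :: (real^'n \<Rightarrow> complex) set)" unfolding schwartz00_def by auto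
  have sp: "sublin schwartz p"
    unfolding sublin_def p_def
  proof (intro conjI ballI allI impI)
    fix x y :: "real^'n \<Rightarrow> complex" assume xy: "x \<in> schwartz" "y \<in> schwartz"
    have "C' * S N (\<lambda>z. x z + y z) \<le> C' * (S N x + S N y)"
      by (rule mult_left_mono[OF S_add[OF xy] C'0])
    then show "C' * S N (x + y) \<le> C' * S N x + C' * S N y"
      unfolding plus_fun_conv by (simp add: distrib_left)
  next
    fix x :: "real^'n \<Rightarrow> complex" and c :: real assume "x \<in> schwartz" "c > 0"
    then show "C' * S N (c *\<^sub>R x) = c * (C' * S N x)"
      unfolding scaleR_fun_conv by (simp add: S_cmult)
  qed
  define l where "l g = Re (L g)" for g
  have "\<exists>\<Lambda>. (\<forall>x\<in>schwartz. \<forall>y\<in>schwartz. \<Lambda> (x + y) = \<Lambda> x + \<Lambda> y) \<and> (\<forall>x\<in>schwartz. \<forall>c. \<Lambda> (c *\<^sub>R x) = c * \<Lambda> x)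
     \<and> (\<forall>w\<in>schwartz00. \<Lambda> w = l w) \<and> (\<forall>x\<in>schwartz. \<Lambda> x \<le> p x)"
  proof (rule vsp.real_HB[OF vsp_schwartz vsp_schwartz00 WV sp])
    show "\<forall>x\<in>schwartz00. \<forall>y\<in>schwartz00. l (x + y) = l x + l y"
      unfolding l_def plus_fun_conv using ladd by simp
    show "\<forall>x\<in>schwartz00. \<forall>c. l (c *\<^sub>R x) = c * l x"
      unfolding l_def scaleR_fun_conv using lhom by simp
    show "\<forall>x\<in>schwartz00. l x \<le> p x"
    proof
      fix x :: "real^'n \<Rightarrow> complex" assume x: "x \<in> schwartz00"
      have "l x \<le> norm (L x)" unfolding l_def by (rule complex_Re_le_cmod)
      also have "\<dots> \<le> C * S N x" using lb x by blast
      also have "\<dots> \<le> p x" unfolding p_def C'_def using S_nonneg[of x N] x WV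
        by (intro mult_right_mono) auto
      finally show "l x \<le> p x" .
    qed
  qed
  then obtain \<Lambda> where Ladd: "\<And>x y. x \<in> schwartz \<Longrightarrow> y \<in> schwartz \<Longrightarrow> \<Lambda> (x + y) = \<Lambda> x + \<Lambda> y"
    and Lhom: "\<And>x c. x \<in> schwartz \<Longrightarrow> \<Lambda> (c *\<^sub>R x) = c * \<Lambda> x"
    and Lext: "\<And>w. w \<in> schwartz00 \<Longrightarrow> \<Lambda> w = l w"
    and Lle: "\<And>x. x \<in> schwartz \<Longrightarrow> \<Lambda> x \<le> p x" by blast
  define T' where "T' g = Complex (\<Lambda> g) (- \<Lambda> (\<lambda>x. \<i> * g x))" for g
  have T'add: "T' (\<lambda>x. f x + g x) = T' f + T' g" if f: "f \<in> schwartz" and g: "g \<in> schwartz" for f g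
  proof -
    have "(\<lambda>x. \<i> * (f x + g x)) = (\<lambda>x. \<i> * f x) + (\<lambda>x. \<i> * g x)" by (simp add: fun_eq_iff algebra_simps)
    moreover have "(\<lambda>x. f x + g x) = f + g" by (simp add: fun_eq_iff)
    ultimately show ?thesis unfolding T'_def
      using Ladd[OF f g] Ladd[OF schwartz_cmult[OF f] schwartz_cmult[OF g]] by (simp add: complex_eq_iff)
  qed
  have T'hom: "T' (\<lambda>x. c * f x) = c * T' f" if f: "f \<in> schwartz" for f c
  proof -
    let ?if = "\<lambda>x. \<i> * f x"
    have if_s: "?if \<in> schwartz" using schwartz_cmult[OF f] .
    have e1: "(\<lambda>x. c * f x) = Re c *\<^sub>R f + Im c *\<^sub>R ?if"
      by (simp add: fun_eq_iff scaleR_fun_def scaleR_conv_of_real algebra_simps complex_eq_iff)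
    have e2: "(\<lambda>x. \<i> * (c * f x)) = Re c *\<^sub>R ?if + (- Im c) *\<^sub>R f"
      by (simp add: fun_eq_iff scaleR_fun_def scaleR_conv_of_real algebra_simps complex_eq_iff)
    have s1: "Re c *\<^sub>R f \<in> schwartz" "Im c *\<^sub>R ?if \<in> schwartz" "Re c *\<^sub>R ?if \<in> schwartz" "(- Im c) *\<^sub>R f \<in> schwartz"
      by (rule vsp.scale[OF vsp_schwartz f] vsp.scale[OF vsp_schwartz if_s])+
    have "\<Lambda> (\<lambda>x. c * f x) = Re c * \<Lambda> f + Im c * \<Lambda> ?if"
      unfolding e1 Ladd[OF s1(1,2)] Lhom[OF f] Lhom[OF if_s] ..
    moreover have "\<Lambda> (\<lambda>x. \<i> * (c * f x)) = Re c * \<Lambda> ?if - Im c * \<Lambda> f"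
      unfolding e2 Ladd[OF s1(3,4)] Lhom[OF f] Lhom[OF if_s] by simp
    ultimately show ?thesis unfolding T'_def by (simp add: complex_eq_iff algebra_simps)
  qed
  have ReT': "Re (T' g) = \<Lambda> g" for g unfolding T'_def by simp
  have T'bound: "norm (T' g) \<le> C' * S N g" if g: "g \<in> schwartz" for g
  proof (cases "T' g = 0")
    case True then show ?thesis using S_nonneg[OF g] C'0 by simp
  next
    case False
    define u where "u = cnj (T' g) / complex_of_real (norm (T' g))"
    have nu: "norm u = 1" unfolding u_def using False by (simp add: norm_divide)
    have ug: "(\<lambda>x. u * g x) \<in> schwartz" using schwartz_cmult[OF g] .
    have "T' (\<lambda>x. u * g x) = u * T' g" by (rule T'hom[OF g])
    also have "\<dots> = complex_of_real (norm (T' g))"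
      unfolding u_def using False by (simp add: complex_norm_square[symmetric] power2_eq_square field_simps)
    finally have "norm (T' g) = \<Lambda> (\<lambda>x. u * g x)" using ReT'[of "\<lambda>x. u * g x"] by simp
    also have "\<dots> \<le> p (\<lambda>x. u * g x)" by (rule Lle[OF ug])
    also have "\<dots> = C' * S N g" unfolding p_def using S_cmult[OF g, of N u] nu by simp
    finally show ?thesis .
  qed
  show ?thesis
  proof (intro exI conjI ballI allI)
    show "tempered_distribution T'"
      unfolding tempered_distribution_def using T'add T'hom T'bound by blast
    fix g :: "real^'n \<Rightarrow> complex" assume g: "g \<in> schwartz00"
    have ig: "(\<lambda>x. \<i> * g x) \<in> schwartz00" by (rule s00_cmult[OF g])
    have "\<Lambda> g = Re (L g)" using Lext[OF g] unfolding l_def .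
    moreover have "\<Lambda> (\<lambda>x. \<i> * g x) = Re (\<i> * L g)" using Lext[OF ig] lhom g unfolding l_def by simp
    ultimately show "T' g = L g" unfolding T'_def by (simp add: complex_eq_iff)
  qed
qed



theorem proposition1:
  fixes m :: "real^'n::finite \<Rightarrow> complex"
  assumes smooth: "smooth_fun_on (UNIV - {0}) m"
    and growth: "\<forall>ds. \<exists>L1 L2 C. L1 \<ge> 0 \<and> L2 \<ge> 0 \<and>
        (\<forall>\<xi>. \<xi> \<noteq> 0 \<longrightarrow> norm (dpart ds m \<xi>) \<le> C * max (norm \<xi> powr (- L1)) (norm \<xi> powr L2))"
  shows "(\<forall>g\<in>schwartz00. (\<lambda>\<xi>. if \<xi> = 0 then 0 else m \<xi> * g \<xi>) \<in> schwartz00) \<and>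
         (\<forall>T. tempered_distribution T \<longrightarrow>
            (\<exists>C N. \<forall>g\<in>schwartz00.
               norm (T (\<lambda>\<xi>. if \<xi> = 0 then 0 else m \<xi> * g \<xi>)) \<le> C * schwartz_seminorm_sum N g) \<and>
            (\<exists>T'. tempered_distribution T' \<and>
               (\<forall>g\<in>schwartz00. T' g = T (\<lambda>\<xi>. if \<xi> = 0 then 0 else m \<xi> * g \<xi>))))"
proof -
  have p1: "\<forall>g\<in>schwartz00. mg m g \<in> schwartz00" using part1[OF smooth growth] by blast
  have p1s: "\<And>g. g \<in> schwartz00 \<Longrightarrow> mg m g \<in> schwartz" using p1 unfolding schwartz00_def by blast
  show ?thesis
  proof (intro conjI allI impI)
    show "\<forall>g\<in>schwartz00. mg m g \<in> schwartz00" by (rule p1)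
    fix T :: "(real^'n \<Rightarrow> complex) \<Rightarrow> complex" assume T: "tempered_distribution T"
    have b: "\<exists>C N. \<forall>g\<in>schwartz00. norm (T (mg m g)) \<le> C * S N g" by (rule part2[OF smooth growth T])
    then show "\<exists>C N. \<forall>g\<in>schwartz00. norm (T (mg m g)) \<le> C * schwartz_seminorm_sum N g" .
    obtain C N where CN: "\<forall>g\<in>schwartz00. norm (T (mg m g)) \<le> C * S N g" using b by blast
    have Tadd: "\<forall>f\<in>schwartz. \<forall>g\<in>schwartz. T (\<lambda>x. f x + g x) = T f + T g"
      and Thom: "\<forall>c. \<forall>f\<in>schwartz. T (\<lambda>x. c * f x) = c * T f"
      using T unfolding tempered_distribution_def by blast+
    show "\<exists>T'. tempered_distribution T' \<and> (\<forall>g\<in>schwartz00. T' g = T (mg m g))"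
    proof (rule complex_HB[where C = C and N = N])
      show "\<forall>f\<in>schwartz00. \<forall>g\<in>schwartz00. T (mg m (\<lambda>x. f x + g x)) = T (mg m f) + T (mg m g)"
      proof (intro ballI)
        fix f g :: "real^'n \<Rightarrow> complex" assume f: "f \<in> schwartz00" and g: "g \<in> schwartz00"
        have "mg m (\<lambda>x. f x + g x) = (\<lambda>x. mg m f x + mg m g x)"
          by (simp add: fun_eq_iff distrib_left)
        then show "T (mg m (\<lambda>x. f x + g x)) = T (mg m f) + T (mg m g)"
          using Tadd p1s[OF f] p1s[OF g] by simp
      qed
      show "\<forall>c. \<forall>f\<in>schwartz00. T (mg m (\<lambda>x. c * f x)) = c * T (mg m f)"
      proof (intro allI ballI)
        fix c and f :: "real^'n \<Rightarrow> complex" assume f: "f \<in> schwartz00"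
        have "mg m (\<lambda>x. c * f x) = (\<lambda>x. c * mg m f x)"
          by (simp add: fun_eq_iff mult.left_commute)
        then show "T (mg m (\<lambda>x. c * f x)) = c * T (mg m f)"
          using Thom p1s[OF f] by simp
      qed
      show "\<forall>g\<in>schwartz00. norm (T (mg m g)) \<le> C * S N g" by (rule CN)
    qed
  qed
qed

end
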